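(* Let $n\geq 2$, let $p$ be a prime, let $x$ be a point of Culler--Vogtmann outer space $CV_n$, let $N$ be a normal subgroup of $F_n$ of index $p$, and let $A\le\mathrm{Out}(F_n)$ be the (finite index) subgroup preserving $N$ and each of its cosets. Then the following three sets are finite and have the same cardinality: (a) the set of $A$-orbits of points in the $\mathrm{Out}(F_n)$-orbit of $x$; (b) the set of $\mathrm{Out}(F_n)_x$-orbits of pairs $(N',tN')$, where $N'$ is an index $p$ normal subgroup of $F_n$ and $tN'\neq N'$ is a coset of it; (c) the set of $\mathrm{Out}(F_n)_x$-orbits of non-trivial homomorphisms $F_n\to\mathbb{Z}/p$.
   Context: $\mathrm{Out}(F_n)$ acts on $CV_n$ on the right; $\mathrm{Out}(F_n)_x$ denotes the stabiliser of $x$. Since an index $p$ normal subgroup $N'$ has abelian quotient, inner automorphisms preserve $N'$ and each of its cosets, so $\mathrm{Out}(F_n)$ acts on such pairs $(N',tN')$ (via $\varphi\cdot(N',tN')=(\varphi^{-1}(N'),\varphi^{-1}(tN'))$) and on homomorphisms $F_n\to\mathbb{Z}/p$ by precomposition. *)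

theory Defs
  imports "HOL-Algebra.Algebra"
begin

type_synonym letter = "nat \<times> bool"
type_synonym word = "letter list"

definition flip :: "letter \<Rightarrow> letter" where
  "flip d = (fst d, \<not> snd d)"

fun reduced :: "word \<Rightarrow> bool" where
  "reduced [] = True"
| "reduced [a] = True"
| "reduced (a # b # w) = (b \<noteq> flip a \<and> reduced (b # w))"

definition red_cons :: "letter \<Rightarrow> word \<Rightarrow> word" where
  "red_cons a w = (case w of [] \<Rightarrow> [a] | b # w' \<Rightarrow> (if b = flip a then w' else a # w))"

definition reduce :: "word \<Rightarrow> word" where
  "reduce w = foldr red_cons w []"

definition free_group :: "nat \<Rightarrow> word monoid" where
  "free_group n = \<lparr>carrier = {w. reduced w \<and> (\<forall>d\<in>set w. fst d < n)},
                   monoid.mult = (\<lambda>u v. reduce (u @ v)), one = []\<rparr>"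

definition Aut :: "nat \<Rightarrow> (word \<Rightarrow> word) set" where
  "Aut n = iso (free_group n) (free_group n)"

definition out_class :: "nat \<Rightarrow> (word \<Rightarrow> word) \<Rightarrow> (word \<Rightarrow> word) set" where
  "out_class n \<Phi> = {\<Psi> \<in> Aut n. \<exists>g\<in>carrier (free_group n). \<forall>w\<in>carrier (free_group n).
      \<Psi> w = g \<otimes>\<^bsub>free_group n\<^esub> \<Phi> w \<otimes>\<^bsub>free_group n\<^esub> inv\<^bsub>free_group n\<^esub> g}"

definition Out :: "nat \<Rightarrow> (word \<Rightarrow> word) set set" where
  "Out n = out_class n ` Aut n"

definition out_rep :: "(word \<Rightarrow> word) set \<Rightarrow> (word \<Rightarrow> word)" where
  "out_rep \<phi> = (SOME \<Phi>. \<Phi> \<in> \<phi>)"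

text \<open>Geometric edges are natural numbers e \<in> E; the oriented edges are (e,True), (e,False),
  with reversal flip. src gives the origin vertex of an oriented edge.\<close>

fun is_path :: "nat set \<Rightarrow> (letter \<Rightarrow> nat) \<Rightarrow> nat \<Rightarrow> word \<Rightarrow> nat \<Rightarrow> bool" where
  "is_path E src u [] v = (u = v)"
| "is_path E src u (d # ds) v = (fst d \<in> E \<and> src d = u \<and> is_path E src (src (flip d)) ds v)"

definition pi1 :: "nat set \<Rightarrow> (letter \<Rightarrow> nat) \<Rightarrow> nat \<Rightarrow> word monoid" where
  "pi1 E src v0 = \<lparr>carrier = {ds. is_path E src v0 ds v0 \<and> reduced ds},
                   monoid.mult = (\<lambda>a b. reduce (a @ b)), one = []\<rparr>"

definition metric_graph :: "nat set \<Rightarrow> nat set \<Rightarrow> (letter \<Rightarrow> nat) \<Rightarrow> (nat \<Rightarrow> real) \<Rightarrow> bool" where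
  "metric_graph V E src len \<longleftrightarrow>
     finite V \<and> V \<noteq> {} \<and> finite E \<and>
     (\<forall>e\<in>E. \<forall>b. src (e, b) \<in> V) \<and>
     (\<forall>u\<in>V. \<forall>v\<in>V. \<exists>ds. is_path E src u ds v) \<and>
     (\<forall>v\<in>V. card {d. fst d \<in> E \<and> src d = v} \<ge> 3) \<and>
     (\<forall>e\<in>E. len e > 0) \<and> sum len E = 1"

text \<open>A marked metric graph: (V, E, src, len, base vertex, marking F_n \<cong> pi_1(G, base)).\<close>
type_synonym mgraph = "nat set \<times> nat set \<times> (letter \<Rightarrow> nat) \<times> (nat \<Rightarrow> real) \<times> nat \<times> (word \<Rightarrow> word)"

definition valid_mgraph :: "nat \<Rightarrow> mgraph \<Rightarrow> bool" where
  "valid_mgraph n g = (case g of (V, E, src, len, v0, m) \<Rightarrow>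
     metric_graph V E src len \<and> v0 \<in> V \<and> m \<in> iso (free_group n) (pi1 E src v0))"

text \<open>Equivalence: an isometry h : G \<rightarrow> G' such that h \<circ> f is (freely) homotopic to f',
  i.e. h_* \<circ> m and m' agree up to change of base point along an edge path \<gamma>.\<close>
definition mg_equiv :: "nat \<Rightarrow> mgraph \<Rightarrow> mgraph \<Rightarrow> bool" where
  "mg_equiv n g g' = (case g of (V, E, src, len, v0, m) \<Rightarrow> case g' of (V', E', src', len', v0', m') \<Rightarrow>
     valid_mgraph n g \<and> valid_mgraph n g' \<and>
     (\<exists>hv hd \<gamma>. bij_betw hv V V' \<and> bij_betw hd (E \<times> UNIV) (E' \<times> UNIV) \<and>
        (\<forall>d\<in>E \<times> UNIV. hd (flip d) = flip (hd d) \<and> src' (hd d) = hv (src d)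
                         \<and> len' (fst (hd d)) = len (fst d)) \<and>
        is_path E' src' (hv v0) \<gamma> v0' \<and>
        (\<forall>w\<in>carrier (free_group n).
           m' w = reduce (map flip (rev \<gamma>) @ map hd (m w) @ \<gamma>))))"

definition mg_class :: "nat \<Rightarrow> mgraph \<Rightarrow> mgraph set" where
  "mg_class n g = {g'. mg_equiv n g g'}"

definition CV :: "nat \<Rightarrow> mgraph set set" where
  "CV n = mg_class n ` {g. valid_mgraph n g}"

definition precomp :: "mgraph \<Rightarrow> (word \<Rightarrow> word) \<Rightarrow> mgraph" where
  "precomp g \<Phi> = (case g of (V, E, src, len, v0, m) \<Rightarrow> (V, E, src, len, v0, m \<circ> \<Phi>))"

definition cv_act :: "nat \<Rightarrow> mgraph set \<Rightarrow> (word \<Rightarrow> word) set \<Rightarrow> mgraph set" where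
  "cv_act n x \<phi> = {g'. \<exists>g\<in>x. \<exists>\<Phi>\<in>\<phi>. mg_equiv n (precomp g \<Phi>) g'}"

definition stab :: "nat \<Rightarrow> mgraph set \<Rightarrow> (word \<Rightarrow> word) set set" where
  "stab n x = {\<phi> \<in> Out n. cv_act n x \<phi> = x}"

definition index_p_pairs :: "nat \<Rightarrow> nat \<Rightarrow> (word set \<times> word set) set" where
  "index_p_pairs n p = {(N', C). N' \<lhd> free_group n \<and> card (rcosets\<^bsub>free_group n\<^esub> N') = p \<and>
       C \<in> rcosets\<^bsub>free_group n\<^esub> N' \<and> C \<noteq> N'}"

definition pair_act :: "nat \<Rightarrow> (word \<Rightarrow> word) set \<Rightarrow> word set \<times> word set \<Rightarrow> word set \<times> word set" where
  "pair_act n \<phi> P = (let \<Phi> = out_rep \<phi> in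
     ({w \<in> carrier (free_group n). \<Phi> w \<in> fst P}, {w \<in> carrier (free_group n). \<Phi> w \<in> snd P}))"

definition nontriv_homs :: "nat \<Rightarrow> nat \<Rightarrow> (word \<Rightarrow> int) set" where
  "nontriv_homs n p = {f \<in> hom (free_group n) (integer_mod_group p).
       f \<in> extensional (carrier (free_group n)) \<and> (\<exists>w\<in>carrier (free_group n). f w \<noteq> 0)}"

definition hom_act :: "nat \<Rightarrow> (word \<Rightarrow> word) set \<Rightarrow> (word \<Rightarrow> int) \<Rightarrow> (word \<Rightarrow> int)" where
  "hom_act n \<phi> f = restrict (f \<circ> out_rep \<phi>) (carrier (free_group n))"

definition coset_stab :: "nat \<Rightarrow> word set \<Rightarrow> (word \<Rightarrow> word) set set" where
  "coset_stab n N = {\<phi> \<in> Out n. \<forall>\<Phi>\<in>\<phi>. \<Phi> ` N = N \<and>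
      (\<forall>t\<in>carrier (free_group n). \<Phi> ` (t <#\<^bsub>free_group n\<^esub> N) = t <#\<^bsub>free_group n\<^esub> N)}"

end

theory Submission
  imports Defs
begin
section \<open>Word combinatorics\<close>

definition inv_w :: "word \<Rightarrow> word" where
  "inv_w w = map flip (rev w)"

lemma flip_flip[simp]: "flip (flip a) = a"
  by (simp add: flip_def)

lemma flip_neq[simp]: "flip a \<noteq> a" "a \<noteq> flip a"
  by (auto simp: flip_def prod_eq_iff)

lemma fst_flip[simp]: "fst (flip a) = fst a"
  by (simp add: flip_def)

lemma flip_eq_iff[simp]: "flip a = flip b \<longleftrightarrow> a = b"
  by (metis flip_flip)

lemma inv_w_inv_w[simp]: "inv_w (inv_w w) = w"
  by (simp add: inv_w_def rev_map comp_def)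

lemma inv_w_append[simp]: "inv_w (u @ v) = inv_w v @ inv_w u"
  by (simp add: inv_w_def)

lemma inv_w_Nil[simp]: "inv_w [] = []" and inv_w_Cons[simp]: "inv_w (a # w) = inv_w w @ [flip a]"
  by (simp_all add: inv_w_def)

lemma set_inv_w: "set (inv_w w) = flip ` set w"
  by (simp add: inv_w_def)

lemma reduced_Cons: "reduced (a # w) \<longleftrightarrow> reduced w \<and> (w = [] \<or> hd w \<noteq> flip a)"
  by (cases w) auto

lemma reduced_red_cons: "reduced w \<Longrightarrow> reduced (red_cons a w)"
proof (cases w)
  case Nil then show ?thesis by (simp add: red_cons_def)
next
  case (Cons b w')
  assume r: "reduced w"
  show ?thesis
  proof (cases "b = flip a")
    case True
    then show ?thesis using r Cons by (simp add: red_cons_def reduced_Cons)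
  next
    case False
    then show ?thesis using r Cons by (simp add: red_cons_def)
  qed
qed

lemma reduced_foldr: "reduced z \<Longrightarrow> reduced (foldr red_cons u z)"
  by (induction u) (auto intro: reduced_red_cons)

lemma reduced_reduce[simp]: "reduced (reduce w)"
  by (simp add: reduce_def reduced_foldr)

lemma red_cons_reduced: "reduced (a # w) \<Longrightarrow> red_cons a w = a # w"
  by (cases w) (auto simp: red_cons_def)

lemma reduce_Cons: "reduce (a # w) = red_cons a (reduce w)"
  by (simp add: reduce_def)

lemma reduce_Nil[simp]: "reduce [] = []"
  by (simp add: reduce_def)

lemma reduce_reduced: "reduced w \<Longrightarrow> reduce w = w"
proof (induction w)
  case Nil then show ?case by simp
next
  case (Cons a w)
  then have "reduced w" by (simp add: reduced_Cons)
  with Cons show ?case by (simp add: reduce_Cons red_cons_reduced)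
qed

lemma reduce_reduce[simp]: "reduce (reduce w) = reduce w"
  by (simp add: reduce_reduced)

lemma reduce_append_foldr: "reduce (u @ v) = foldr red_cons u (reduce v)"
  by (simp add: reduce_def)

lemma red_cons_cancel: "reduced z \<Longrightarrow> red_cons a (red_cons (flip a) z) = z"
proof (cases z)
  case Nil then show ?thesis by (simp add: red_cons_def)
next
  case (Cons b z')
  assume r: "reduced z"
  show ?thesis
  proof (cases "b = a")
    case True
    then have "red_cons (flip a) z = z'" using Cons by (simp add: red_cons_def)
    moreover have "red_cons a z' = a # z'"
      using r Cons True by (intro red_cons_reduced) simp
    ultimately show ?thesis using Cons True by simp
  next
    case False
    then show ?thesis using Cons by (simp add: red_cons_def)
  qed
qed

lemma foldr_red_cons_red_cons:
  assumes "reduced z"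
  shows "foldr red_cons (red_cons a w) z = red_cons a (foldr red_cons w z)"
proof (cases w)
  case Nil then show ?thesis by (simp add: red_cons_def)
next
  case (Cons b w')
  show ?thesis
  proof (cases "b = flip a")
    case True
    have "red_cons a (red_cons (flip a) (foldr red_cons w' z)) = foldr red_cons w' z"
      by (rule red_cons_cancel) (simp add: reduced_foldr assms)
    then show ?thesis using Cons True by (simp add: red_cons_def)
  next
    case False
    then show ?thesis using Cons by (simp add: red_cons_def)
  qed
qed

lemma foldr_reduce: "reduced z \<Longrightarrow> foldr red_cons (reduce u) z = foldr red_cons u z"
proof (induction u)
  case Nil then show ?case by simp
next
  case (Cons a u)
  then show ?case by (simp add: reduce_Cons foldr_red_cons_red_cons)
qed

lemma reduce_left[simp]: "reduce (reduce u @ v) = reduce (u @ v)"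
  by (simp add: reduce_append_foldr foldr_reduce)

lemma reduce_right[simp]: "reduce (u @ reduce v) = reduce (u @ v)"
  by (simp add: reduce_append_foldr)

lemma reduce_mid: "reduce (u @ reduce v @ w) = reduce (u @ v @ w)"
  by (metis reduce_right reduce_left append_assoc)

lemma foldr_inv_cancel: "reduced z \<Longrightarrow> foldr red_cons (u @ inv_w u) z = z"
proof (induction u arbitrary: z)
  case Nil then show ?case by simp
next
  case (Cons a u)
  have "foldr red_cons (u @ inv_w u) (red_cons (flip a) z) = red_cons (flip a) z"
    using Cons by (simp add: reduced_red_cons)
  then show ?case using Cons.prems by (simp add: red_cons_cancel)
qed

lemma reduce_cancel: "reduce (u @ inv_w u @ v) = reduce v"
  using foldr_inv_cancel[of "reduce v" u] by (simp add: reduce_append_foldr)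

lemma reduce_cancel': "reduce (inv_w u @ u @ v) = reduce v"
  using reduce_cancel[of "inv_w u" v] by simp

lemma reduce_cancel_Nil[simp]: "reduce (u @ inv_w u) = []" "reduce (inv_w u @ u) = []"
  using reduce_cancel[of u "[]"] reduce_cancel'[of u "[]"] by simp_all

lemma set_red_cons: "set (red_cons a w) \<subseteq> insert a (set w)"
  by (cases w) (auto simp: red_cons_def)

lemma set_reduce: "set (reduce w) \<subseteq> set w"
proof (induction w)
  case Nil then show ?case by simp
next
  case (Cons a w)
  then show ?case using set_red_cons[of a "reduce w"] by (auto simp: reduce_Cons)
qed

lemma map_red_cons:
  assumes "inj_on h S" "\<forall>d\<in>S. flip d \<in> S \<and> h (flip d) = flip (h d)" "a \<in> S" "set w \<subseteq> S"
  shows "map h (red_cons a w) = red_cons (h a) (map h w)"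
proof (cases w)
  case Nil then show ?thesis by (simp add: red_cons_def)
next
  case (Cons b w')
  have "b \<in> S" "flip a \<in> S" using assms Cons by auto
  have "h (flip a) = flip (h a)" using assms(2,3) by blast
  moreover have "(h b = h (flip a)) = (b = flip a)"
    using assms(1) \<open>b \<in> S\<close> \<open>flip a \<in> S\<close> by (rule inj_on_eq_iff)
  ultimately have "(h b = flip (h a)) = (b = flip a)" by simp
  then show ?thesis using Cons by (simp add: red_cons_def)
qed

lemma map_reduce:
  assumes "inj_on h S" "\<forall>d\<in>S. flip d \<in> S \<and> h (flip d) = flip (h d)" "set w \<subseteq> S"
  shows "map h (reduce w) = reduce (map h w)"
  using assms(3)
proof (induction w)
  case Nil then show ?case by simp
next
  case (Cons a w)
  have "set (reduce w) \<subseteq> S" using Cons set_reduce by force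
  then show ?case using Cons assms(1,2) by (simp add: reduce_Cons map_red_cons)
qed

lemma map_inv_w: "(\<And>d. d \<in> set w \<Longrightarrow> h (flip d) = flip (h d)) \<Longrightarrow> map h (inv_w w) = inv_w (map h w)"
  by (induction w) auto

lemma reduced_snoc: "reduced (u @ [b]) \<longleftrightarrow> reduced u \<and> (u = [] \<or> b \<noteq> flip (last u))"
proof (induction u)
  case Nil then show ?case by simp
next
  case (Cons a u)
  then show ?case by (cases u) (auto simp: reduced_Cons)
qed

lemma last_inv_w: "w \<noteq> [] \<Longrightarrow> last (inv_w w) = flip (hd w)"
  by (cases w) auto

lemma reduced_inv_w: "reduced x \<Longrightarrow> reduced (inv_w x)"
proof (induction x)
  case Nil then show ?case by simp
next
  case (Cons a w)
  then have r: "reduced w" "w = [] \<or> hd w \<noteq> flip a" by (auto simp: reduced_Cons)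
  have "inv_w w = [] \<or> flip a \<noteq> flip (last (inv_w w))"
  proof (cases "w = []")
    case False
    then have "last (inv_w w) = flip (hd w)" by (rule last_inv_w)
    then show ?thesis using r False by auto
  qed simp
  then show ?case using Cons r unfolding inv_w_Cons reduced_snoc by blast
qed

lemma is_path_append: "is_path E src u (x @ y) w \<longleftrightarrow> (\<exists>v. is_path E src u x v \<and> is_path E src v y w)"
  by (induction x arbitrary: u) auto

lemma is_path_snoc: "is_path E src u (x @ [d]) w \<longleftrightarrow> (\<exists>v. is_path E src u x v \<and> fst d \<in> E \<and> src d = v \<and> src (flip d) = w)"
  by (simp add: is_path_append)

lemma is_path_inv: "is_path E src u x v \<Longrightarrow> is_path E src v (inv_w x) u"
  by (induction x arbitrary: u) (auto simp: is_path_append)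

lemma is_path_red_cons: "is_path E src u (a # w) v \<Longrightarrow> is_path E src u (red_cons a w) v"
  by (cases w) (auto simp: red_cons_def)

lemma is_path_reduce: "is_path E src u w v \<Longrightarrow> is_path E src u (reduce w) v"
proof (induction w arbitrary: u)
  case Nil then show ?case by simp
next
  case (Cons a w)
  then have "is_path E src u (a # reduce w) v" by simp
  then show ?case by (simp add: reduce_Cons is_path_red_cons)
qed

lemma is_path_set: "is_path E src u w v \<Longrightarrow> set w \<subseteq> E \<times> UNIV"
  by (induction w arbitrary: u) (auto simp: mem_Times_iff)

lemma is_path_map:
  assumes "\<forall>d\<in>E \<times> UNIV. h (flip d) = flip (h d) \<and> src' (h d) = hv (src d)"
    and "\<forall>d\<in>E \<times> UNIV. fst (h d) \<in> E'"
  shows "is_path E src u w v \<Longrightarrow> is_path E' src' (hv u) (map h w) (hv v)"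
proof (induction w arbitrary: u)
  case Nil then show ?case by simp
next
  case (Cons d w)
  then have d: "d \<in> E \<times> UNIV" "flip d \<in> E \<times> UNIV" by (auto simp: mem_Times_iff)
  have e: "h (flip d) = flip (h d)" "src' (h d) = hv (src d)" 
    using d(1) assms(1) by auto
  have e2: "src' (h (flip d)) = hv (src (flip d))" using bspec[OF assms(1) d(2)] by (rule conjunct2)
  have e3: "fst (h d) \<in> E'" using d(1) assms(2) by blast
  have "is_path E' src' (hv (src (flip d))) (map h w) (hv v)" using Cons by auto
  then show ?case using Cons e e2 e3 by (auto simp del: fst_flip)
qed

definition wg :: "(word \<Rightarrow> bool) \<Rightarrow> word monoid" where
  "wg L = \<lparr>carrier = {w. reduced w \<and> L w}, monoid.mult = (\<lambda>a b. reduce (a @ b)), one = []\<rparr>"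

locale word_lang =
  fixes L :: "word \<Rightarrow> bool"
  assumes L_Nil: "L []"
    and L_mult: "L x \<Longrightarrow> L y \<Longrightarrow> L (reduce (x @ y))"
    and L_inv: "L x \<Longrightarrow> L (inv_w x)"
begin

lemma carrier_wg: "carrier (wg L) = {w. reduced w \<and> L w}"
  by (simp add: wg_def)

lemma mult_wg: "x \<otimes>\<^bsub>wg L\<^esub> y = reduce (x @ y)"
  by (simp add: wg_def)

lemma one_wg: "\<one>\<^bsub>wg L\<^esub> = []"
  by (simp add: wg_def)


end

context word_lang
begin

lemma group_wg: "group (wg L)"
proof (rule groupI)
  fix x y assume "x \<in> carrier (wg L)" "y \<in> carrier (wg L)"
  then show "x \<otimes>\<^bsub>wg L\<^esub> y \<in> carrier (wg L)"
    by (simp add: carrier_wg mult_wg L_mult)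
next
  show "\<one>\<^bsub>wg L\<^esub> \<in> carrier (wg L)" by (simp add: carrier_wg one_wg L_Nil)
next
  fix x y z assume "x \<in> carrier (wg L)" "y \<in> carrier (wg L)" "z \<in> carrier (wg L)"
  then show "x \<otimes>\<^bsub>wg L\<^esub> y \<otimes>\<^bsub>wg L\<^esub> z = x \<otimes>\<^bsub>wg L\<^esub> (y \<otimes>\<^bsub>wg L\<^esub> z)"
    by (simp add: mult_wg)
next
  fix x assume "x \<in> carrier (wg L)"
  then show "\<one>\<^bsub>wg L\<^esub> \<otimes>\<^bsub>wg L\<^esub> x = x"
    by (simp add: mult_wg one_wg carrier_wg reduce_reduced)
next
  fix x assume "x \<in> carrier (wg L)"
  then have "inv_w x \<in> carrier (wg L)" "inv_w x \<otimes>\<^bsub>wg L\<^esub> x = \<one>\<^bsub>wg L\<^esub>"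
    by (simp_all add: carrier_wg mult_wg one_wg reduced_inv_w L_inv)
  then show "\<exists>y\<in>carrier (wg L). y \<otimes>\<^bsub>wg L\<^esub> x = \<one>\<^bsub>wg L\<^esub>" by blast
qed

lemma inv_wg: "x \<in> carrier (wg L) \<Longrightarrow> inv\<^bsub>wg L\<^esub> x = inv_w x"
  by (rule group.inv_equality[OF group_wg])
     (simp_all add: carrier_wg mult_wg one_wg reduced_inv_w L_inv)

end

definition LF :: "nat \<Rightarrow> word \<Rightarrow> bool" where
  "LF n w = (\<forall>d\<in>set w. fst d < n)"

lemma free_group_wg: "free_group n = wg (LF n)"
  by (simp add: free_group_def wg_def LF_def)

lemma word_lang_LF: "word_lang (LF n)"
proof
  show "LF n []" by (simp add: LF_def)
  fix x y assume "LF n x" "LF n y"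
  then show "LF n (reduce (x @ y))" using set_reduce[of "x @ y"] by (auto simp: LF_def)
next
  fix x assume "LF n x" then show "LF n (inv_w x)" by (auto simp: LF_def set_inv_w)
qed

lemma pi1_wg: "pi1 E src v0 = wg (\<lambda>w. is_path E src v0 w v0)"
  by (simp add: pi1_def wg_def conj_commute)

lemma word_lang_path: "word_lang (\<lambda>w. is_path E src v0 w v0)"
proof
  show "is_path E src v0 [] v0" by simp
  fix x y assume "is_path E src v0 x v0" "is_path E src v0 y v0"
  then show "is_path E src v0 (reduce (x @ y)) v0"
    by (intro is_path_reduce) (auto simp: is_path_append)
next
  fix x assume "is_path E src v0 x v0" then show "is_path E src v0 (inv_w x) v0"
    by (rule is_path_inv)
qed

lemma group_free: "group (free_group n)"
  by (simp add: free_group_wg word_lang.group_wg[OF word_lang_LF])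

lemma group_pi1: "group (pi1 E src v0)"
  by (simp add: pi1_wg word_lang.group_wg[OF word_lang_path])

lemma carrier_free: "carrier (free_group n) = {w. reduced w \<and> (\<forall>d\<in>set w. fst d < n)}"
  by (simp add: free_group_def)

lemma mult_free: "x \<otimes>\<^bsub>free_group n\<^esub> y = reduce (x @ y)"
  by (simp add: free_group_def)

lemma one_free: "\<one>\<^bsub>free_group n\<^esub> = []"
  by (simp add: free_group_def)

lemma inv_free: "x \<in> carrier (free_group n) \<Longrightarrow> inv\<^bsub>free_group n\<^esub> x = inv_w x"
  unfolding free_group_wg by (rule word_lang.inv_wg[OF word_lang_LF])

lemma carrier_pi1: "carrier (pi1 E src v0) = {ds. is_path E src v0 ds v0 \<and> reduced ds}"
  by (simp add: pi1_def)

lemma mult_pi1: "x \<otimes>\<^bsub>pi1 E src v0\<^esub> y = reduce (x @ y)"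
  by (simp add: pi1_def)

lemma one_pi1: "\<one>\<^bsub>pi1 E src v0\<^esub> = []"
  by (simp add: pi1_def)

lemma inv_pi1: "x \<in> carrier (pi1 E src v0) \<Longrightarrow> inv\<^bsub>pi1 E src v0\<^esub> x = inv_w x"
  unfolding pi1_wg by (rule word_lang.inv_wg[OF word_lang_path])

lemma free_Cons: "a # w \<in> carrier (free_group n) \<Longrightarrow> a # w = [a] \<otimes>\<^bsub>free_group n\<^esub> w"
  by (simp add: mult_free carrier_free reduce_reduced)

lemma free_Cons_carrier: "a # w \<in> carrier (free_group n) \<Longrightarrow> [a] \<in> carrier (free_group n) \<and> w \<in> carrier (free_group n)"
  by (simp add: carrier_free reduced_Cons)

lemma hom_free_eq:
  assumes "f \<in> hom (free_group n) H" "g \<in> hom (free_group n) H" "group H"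
    and "\<And>i. i < n \<Longrightarrow> f [(i, True)] = g [(i, True)]"
  shows "w \<in> carrier (free_group n) \<Longrightarrow> f w = g w"
proof (induction w)
  case Nil
  interpret f: group_hom "free_group n" H f
    using assms group_free by (simp add: group_hom_def group_hom_axioms_def)
  interpret g: group_hom "free_group n" H g
    using assms group_free by (simp add: group_hom_def group_hom_axioms_def)
  have "f [] = \<one>\<^bsub>H\<^esub>" "g [] = \<one>\<^bsub>H\<^esub>"
    using f.hom_one g.hom_one by (simp_all add: one_free)
  then show ?case by simp
next
  case (Cons a w)
  have c: "[a] \<in> carrier (free_group n)" "w \<in> carrier (free_group n)"
    using free_Cons_carrier[OF Cons.prems] by auto
  have sing: "f [a] = g [a]"
  proof (cases "snd a")
    case True
    then have "a = (fst a, True)" by (cases a) auto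
    moreover have "fst a < n" using c by (simp add: carrier_free)
    ultimately show ?thesis using assms(4)[of "fst a"] by simp
  next
    case False
    then have a: "a = flip (fst a, True)" by (cases a) (auto simp: flip_def)
    have i: "fst a < n" using c by (simp add: carrier_free)
    have ci: "[(fst a, True)] \<in> carrier (free_group n)" using i by (simp add: carrier_free)
    have "[a] = inv\<^bsub>free_group n\<^esub> [(fst a, True)]"
      using a ci by (simp add: inv_free inv_w_def)
    interpret f: group_hom "free_group n" H f
      using assms group_free by (simp add: group_hom_def group_hom_axioms_def)
    interpret g: group_hom "free_group n" H g
      using assms group_free by (simp add: group_hom_def group_hom_axioms_def)
    show ?thesis using f.hom_inv[OF ci] g.hom_inv[OF ci] assms(4)[OF i] \<open>[a] = _\<close> by simp
  qed
  have e: "a # w = [a] \<otimes>\<^bsub>free_group n\<^esub> w" by (rule free_Cons[OF Cons.prems])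
  have "f (a # w) = f [a] \<otimes>\<^bsub>H\<^esub> f w" "g (a # w) = g [a] \<otimes>\<^bsub>H\<^esub> g w"
    by (subst e, rule hom_mult[OF assms(1) c], subst e, rule hom_mult[OF assms(2) c])
  then show ?case using sing Cons c by simp
qed

definition subst :: "(letter \<Rightarrow> word) \<Rightarrow> word \<Rightarrow> word" where
  "subst \<sigma> w = reduce (concat (map \<sigma> w))"

definition flipc :: "(letter \<Rightarrow> word) \<Rightarrow> bool" where
  "flipc \<sigma> \<longleftrightarrow> (\<forall>a. \<sigma> (flip a) = inv_w (\<sigma> a))"

lemma concat_red_cons:
  assumes "flipc \<sigma>"
  shows "reduce (concat (map \<sigma> (red_cons a v))) = reduce (\<sigma> a @ concat (map \<sigma> v))"
proof (cases v)
  case Nil then show ?thesis by (simp add: red_cons_def)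
next
  case (Cons b v')
  show ?thesis
  proof (cases "b = flip a")
    case True
    have "\<sigma> (flip a) = inv_w (\<sigma> a)" using assms unfolding flipc_def by blast
    then show ?thesis using Cons True by (simp add: red_cons_def reduce_cancel)
  next
    case False
    then show ?thesis using Cons by (simp add: red_cons_def)
  qed
qed

lemma subst_reduce: "flipc \<sigma> \<Longrightarrow> subst \<sigma> (reduce w) = subst \<sigma> w"
proof (induction w)
  case Nil then show ?case by simp
next
  case (Cons a w)
  have "subst \<sigma> (reduce (a # w)) = reduce (\<sigma> a @ concat (map \<sigma> (reduce w)))"
    using Cons by (simp add: subst_def reduce_Cons concat_red_cons)
  also have "\<dots> = reduce (\<sigma> a @ subst \<sigma> (reduce w))" by (simp add: subst_def)
  also have "\<dots> = reduce (\<sigma> a @ subst \<sigma> w)" using Cons by simp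
  also have "\<dots> = subst \<sigma> (a # w)" by (simp add: subst_def)
  finally show ?case .
qed

lemma subst_mult: "flipc \<sigma> \<Longrightarrow> subst \<sigma> (reduce (u @ v)) = reduce (subst \<sigma> u @ subst \<sigma> v)"
  by (simp add: subst_reduce) (simp add: subst_def)

lemma reduce_concat_reduce: "reduce (concat (map (\<lambda>a. reduce (\<rho> a)) w)) = reduce (concat (map \<rho> w))"
proof (induction w)
  case Nil then show ?case by simp
next
  case (Cons a w)
  have "reduce (concat (map (\<lambda>a. reduce (\<rho> a)) (a # w))) = reduce (\<rho> a @ reduce (concat (map (\<lambda>a. reduce (\<rho> a)) w)))"
    by simp
  also have "\<dots> = reduce (\<rho> a @ concat (map \<rho> w))" using Cons by simp
  finally show ?case by simp
qed

lemma concat_map_concat: "concat (map \<sigma> (concat (map \<tau> w))) = concat (map (\<lambda>a. concat (map \<sigma> (\<tau> a))) w)"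
  by (induction w) auto

lemma subst_subst: "flipc \<sigma> \<Longrightarrow> subst \<sigma> (subst \<tau> w) = subst (\<lambda>a. subst \<sigma> (\<tau> a)) w"
proof -
  assume f: "flipc \<sigma>"
  have "subst \<sigma> (subst \<tau> w) = reduce (concat (map \<sigma> (concat (map \<tau> w))))"
    unfolding subst_def[of \<sigma> "subst \<tau> w"] subst_def[of \<tau>]
    using subst_reduce[OF f, of "concat (map \<tau> w)"] by (simp add: subst_def)
  also have "\<dots> = reduce (concat (map (\<lambda>a. concat (map \<sigma> (\<tau> a))) w))"
    by (simp add: concat_map_concat)
  also have "\<dots> = subst (\<lambda>a. subst \<sigma> (\<tau> a)) w"
    unfolding subst_def by (rule reduce_concat_reduce[symmetric])
  finally show ?thesis .
qed

lemma subst_cong: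
  assumes "\<And>a. a \<in> set w \<Longrightarrow> \<sigma> a = \<tau> a"
  shows "subst \<sigma> w = subst \<tau> w"
proof -
  have "map \<sigma> w = map \<tau> w" using assms by (simp add: map_eq_conv)
  then show ?thesis unfolding subst_def by (rule arg_cong[where f="\<lambda>x. reduce (concat x)"])
qed

lemma subst_single: "subst (\<lambda>a. [a]) w = reduce w"
  by (simp add: subst_def)

lemma subst_carrier:
  assumes "\<And>a. fst a < n \<Longrightarrow> LF n (\<sigma> a)" "w \<in> carrier (free_group n)"
  shows "subst \<sigma> w \<in> carrier (free_group n)"
proof -
  have "\<forall>d\<in>set (concat (map \<sigma> w)). fst d < n"
    using assms by (auto simp: carrier_free LF_def)
  moreover have "set (reduce (concat (map \<sigma> w))) \<subseteq> set (concat (map \<sigma> w))" by (rule set_reduce)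
  ultimately have "\<forall>d\<in>set (reduce (concat (map \<sigma> w))). fst d < n" by blast
  then show ?thesis unfolding carrier_free subst_def by simp
qed

lemma subst_hom:
  assumes "flipc \<sigma>" "\<And>a. fst a < n \<Longrightarrow> LF n (\<sigma> a)"
  shows "subst \<sigma> \<in> hom (free_group n) (free_group n)"
  by (rule homI) (simp_all add: subst_carrier assms mult_free subst_mult)

lemma subst_auto:
  assumes "flipc \<sigma>" "\<And>a. fst a < n \<Longrightarrow> LF n (\<sigma> a)"
    and "flipc \<tau>" "\<And>a. fst a < n \<Longrightarrow> LF n (\<tau> a)"
    and "\<And>a. fst a < n \<Longrightarrow> subst \<sigma> (\<tau> a) = [a]"
    and "\<And>a. fst a < n \<Longrightarrow> subst \<tau> (\<sigma> a) = [a]"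
  shows "restrict (subst \<sigma>) (carrier (free_group n)) \<in> auto (free_group n)"
proof -
  have id1: "subst \<sigma> (subst \<tau> w) = w" if "w \<in> carrier (free_group n)" for w
  proof -
    have "subst \<sigma> (subst \<tau> w) = subst (\<lambda>a. subst \<sigma> (\<tau> a)) w" by (rule subst_subst[OF assms(1)])
    also have "\<dots> = subst (\<lambda>a. [a]) w"
      using that assms(5) by (intro subst_cong) (auto simp: carrier_free)
    finally show ?thesis using that by (simp add: subst_single reduce_reduced carrier_free)
  qed
  have id2: "subst \<tau> (subst \<sigma> w) = w" if "w \<in> carrier (free_group n)" for w
  proof -
    have "subst \<tau> (subst \<sigma> w) = subst (\<lambda>a. subst \<tau> (\<sigma> a)) w" by (rule subst_subst[OF assms(3)])
    also have "\<dots> = subst (\<lambda>a. [a]) w"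
      using that assms(6) by (intro subst_cong) (auto simp: carrier_free)
    finally show ?thesis using that by (simp add: subst_single reduce_reduced carrier_free)
  qed
  have h: "subst \<sigma> \<in> hom (free_group n) (free_group n)" by (rule subst_hom[OF assms(1,2)])
  have bij: "bij_betw (subst \<sigma>) (carrier (free_group n)) (carrier (free_group n))"
  proof (rule bij_betwI[where g = "subst \<tau>"])
    show "subst \<sigma> \<in> carrier (free_group n) \<rightarrow> carrier (free_group n)"
      using subst_carrier[OF assms(2)] by (intro Pi_I)
    show "subst \<tau> \<in> carrier (free_group n) \<rightarrow> carrier (free_group n)"
      using subst_carrier[OF assms(4)] by (intro Pi_I)
  qed (simp_all add: id1 id2)
  have "restrict (subst \<sigma>) (carrier (free_group n)) \<in> hom (free_group n) (free_group n)"
    by (rule group.hom_restrict[OF group_free h]) (rule restrict_apply'[symmetric])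
  moreover have "restrict (subst \<sigma>) (carrier (free_group n)) \<in> Bij (carrier (free_group n))"
    unfolding Bij_def
  proof (rule IntI)
    show "restrict (subst \<sigma>) (carrier (free_group n)) \<in> extensional (carrier (free_group n))"
      by (rule restrict_extensional)
    have "bij_betw (restrict (subst \<sigma>) (carrier (free_group n))) (carrier (free_group n)) (carrier (free_group n))"
      using bij by (subst bij_betw_cong[where g = "subst \<sigma>"]) (rule restrict_apply', assumption)
    then show "restrict (subst \<sigma>) (carrier (free_group n)) \<in> {f. bij_betw f (carrier (free_group n)) (carrier (free_group n))}"
      by (simp only: mem_Collect_eq)
  qed
  ultimately show ?thesis unfolding auto_def by (rule IntI)
qed

lemma solve_mod:
  fixes a b t :: int and p :: nat
  assumes "Factorial_Ring.prime p" "a mod int p \<noteq> 0"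
  shows "\<exists>m::nat. (b + int m * a) mod int p = t mod int p"
proof -
  have pi: "Factorial_Ring.prime (int p)" using assms(1) by simp
  have "\<not> int p dvd a" using assms(2) by (simp add: dvd_eq_mod_eq_0)
  then have "coprime (int p) a" using pi by (simp add: prime_imp_coprime)
  then have g: "gcd a (int p) = 1" by (simp add: coprime_iff_gcd_eq_1 gcd.commute)
  obtain u v where uv: "u * a + v * int p = gcd a (int p)" using bezout_int by blast
  then have uv1: "u * a + v * int p = 1" using g by simp
  have pp: "int p > 0" using assms(1) prime_gt_0_nat by simp
  define m where "m = nat (((t - b) * u) mod int p)"
  have m: "int m = ((t - b) * u) mod int p" using pp by (simp add: m_def)
  have ua: "u * a = 1 - v * int p" using uv1 by simp
  have tb: "(t - b) * u * a = (t - b) * (1 - v * int p)" by (metis ua mult.assoc)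
  have mm: "(int m * a) mod int p = ((t - b) * u * a) mod int p"
    unfolding m by (rule mod_mult_left_eq)
  have "(b + int m * a) mod int p = (b + (int m * a) mod int p) mod int p"
    by (rule mod_add_right_eq[symmetric])
  also have "\<dots> = (b + ((t - b) * u * a) mod int p) mod int p" by (simp only: mm)
  also have "\<dots> = (b + (t - b) * u * a) mod int p" by (rule mod_add_right_eq)
  also have "\<dots> = (b + (t - b) * (1 - v * int p)) mod int p" by (simp only: tb)
  also have "(b + (t - b) * (1 - v * int p)) = t + (- (t - b) * v) * int p" by (simp add: algebra_simps)
  also have "(t + (- (t - b) * v) * int p) mod int p = t mod int p" by simp
  finally show ?thesis ..
qed

section \<open>Weighted homomorphisms to Z/p\<close>

definition wt :: "(nat \<Rightarrow> int) \<Rightarrow> letter \<Rightarrow> int" where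
  "wt v a = (if snd a then v (fst a) else - v (fst a))"

definition wsum :: "(nat \<Rightarrow> int) \<Rightarrow> word \<Rightarrow> int" where
  "wsum v w = sum_list (map (wt v) w)"

lemma wt_flip[simp]: "wt v (flip a) = - wt v a"
  by (simp add: wt_def flip_def)

lemma wsum_Nil[simp]: "wsum v [] = 0" and wsum_Cons[simp]: "wsum v (a # w) = wt v a + wsum v w"
  and wsum_append[simp]: "wsum v (x @ y) = wsum v x + wsum v y"
  by (simp_all add: wsum_def)

lemma wsum_red_cons: "wsum v (red_cons a w) = wt v a + wsum v w"
  by (cases w) (auto simp: red_cons_def)

lemma wsum_reduce[simp]: "wsum v (reduce w) = wsum v w"
  by (induction w) (simp_all add: reduce_Cons wsum_red_cons)

definition hw :: "nat \<Rightarrow> nat \<Rightarrow> (nat \<Rightarrow> int) \<Rightarrow> word \<Rightarrow> int" where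
  "hw n p v = restrict (\<lambda>w. wsum v w mod int p) (carrier (free_group n))"

lemma hw_hom: "p > 0 \<Longrightarrow> hw n p v \<in> hom (free_group n) (integer_mod_group p)"
proof (rule homI)
  fix x assume "p > 0" "x \<in> carrier (free_group n)"
  then show "hw n p v x \<in> carrier (integer_mod_group p)"
    by (simp add: hw_def carrier_integer_mod_group)
next
  fix x y assume "x \<in> carrier (free_group n)" "y \<in> carrier (free_group n)"
  moreover have "x \<otimes>\<^bsub>free_group n\<^esub> y \<in> carrier (free_group n)"
    using calculation group.subgroup_self[OF group_free] by (simp add: group.is_monoid[OF group_free] monoid.m_closed)
  ultimately show "hw n p v (x \<otimes>\<^bsub>free_group n\<^esub> y) = hw n p v x \<otimes>\<^bsub>integer_mod_group p\<^esub> hw n p v y"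
    by (simp add: hw_def mult_free mod_add_eq)
qed

lemma hw_ext: "hw n p v \<in> extensional (carrier (free_group n))"
  by (simp add: hw_def)

lemma hw_gen: "i < n \<Longrightarrow> hw n p v [(i, True)] = v i mod int p"
  by (simp add: hw_def carrier_free wt_def)

lemma wsum_cong: "(\<And>i. i < n \<Longrightarrow> v i mod int p = v' i mod int p) \<Longrightarrow> \<forall>d\<in>set w. fst d < n
   \<Longrightarrow> wsum v w mod int p = wsum v' w mod int p"
proof (induction w)
  case Nil then show ?case by simp
next
  case (Cons a w)
  have k: "v (fst a) mod int p = v' (fst a) mod int p" using Cons.prems by simp
  have h: "wt v a mod int p = wt v' a mod int p"
  proof (cases "snd a")
    case True then show ?thesis using k by (simp add: wt_def)
  next
    case False
    have "(- v (fst a)) mod int p = (- (v (fst a) mod int p)) mod int p" by (simp add: mod_minus_eq)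
    also have "\<dots> = (- (v' (fst a) mod int p)) mod int p" using k by simp
    also have "\<dots> = (- v' (fst a)) mod int p" by (simp add: mod_minus_eq)
    finally show ?thesis using False by (simp add: wt_def)
  qed
  have IH: "wsum v w mod int p = wsum v' w mod int p" using Cons by simp
  have "wsum v (a # w) mod int p = (wt v a mod int p + wsum v w mod int p) mod int p"
    by (simp add: mod_add_eq)
  also have "\<dots> = (wt v' a mod int p + wsum v' w mod int p) mod int p" using h IH by simp
  also have "\<dots> = wsum v' (a # w) mod int p" by (simp add: mod_add_eq)
  finally show ?case .
qed

lemma hw_cong:
  assumes a: "\<And>i. i < n \<Longrightarrow> v i mod int p = v' i mod int p"
  shows "hw n p v = hw n p v'"
  unfolding hw_def
proof (rule restrict_ext)
  fix w assume "w \<in> carrier (free_group n)"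
  then have "\<forall>d\<in>set w. fst d < n" by (simp add: carrier_free)
  then show "wsum v w mod int p = wsum v' w mod int p"
    using wsum_cong[of n v p v' w] a by blast
qed

lemma hom_is_hw:
  assumes "p > 0" "f \<in> hom (free_group n) (integer_mod_group p)" "f \<in> extensional (carrier (free_group n))"
  shows "f = hw n p (\<lambda>i. f [(i, True)])"
proof (rule extensionalityI[OF assms(3) hw_ext])
  fix w assume w: "w \<in> carrier (free_group n)"
  show "f w = hw n p (\<lambda>i. f [(i, True)]) w"
  proof (rule hom_free_eq[OF assms(2) hw_hom[OF assms(1)] group_integer_mod_group _ w])
    fix i assume i: "i < n"
    have "[(i, True)] \<in> carrier (free_group n)" using i by (simp add: carrier_free)
    then have "f [(i, True)] \<in> {0..<int p}"
      using hom_in_carrier[OF assms(2)] assms(1) by (force simp: carrier_integer_mod_group)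
    then show "f [(i, True)] = hw n p (\<lambda>i. f [(i, True)]) [(i, True)]"
      using i by (simp add: hw_gen)
  qed
qed

abbreviation AG :: "nat \<Rightarrow> (word \<Rightarrow> word) monoid" where
  "AG n \<equiv> AutoGroup (free_group n)"

lemma group_AG: "group (AG n)"
  by (rule group.AutoGroup[OF group_free])

lemma carrier_AG: "carrier (AG n) = auto (free_group n)"
  by (simp add: AutoGroup_def BijGroup_def)

lemma auto_Bij: "\<Phi> \<in> auto G \<Longrightarrow> \<Phi> \<in> Bij (carrier G)"
  by (simp add: auto_def)

lemma mult_AG: "\<Phi> \<in> auto (free_group n) \<Longrightarrow> \<Psi> \<in> auto (free_group n) \<Longrightarrow>
   \<Phi> \<otimes>\<^bsub>AG n\<^esub> \<Psi> = compose (carrier (free_group n)) \<Phi> \<Psi>"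
  by (simp add: AutoGroup_def BijGroup_def auto_Bij)

lemma one_AG: "\<one>\<^bsub>AG n\<^esub> = (\<lambda>x\<in>carrier (free_group n). x)"
  by (simp add: AutoGroup_def BijGroup_def)

lemma auto_carrier: "\<Phi> \<in> auto (free_group n) \<Longrightarrow> w \<in> carrier (free_group n) \<Longrightarrow> \<Phi> w \<in> carrier (free_group n)"
  unfolding auto_def by (blast intro: hom_in_carrier)

lemma auto_hom: "\<Phi> \<in> auto (free_group n) \<Longrightarrow> \<Phi> \<in> hom (free_group n) (free_group n)"
  by (simp add: auto_def)

lemma auto_bij: "\<Phi> \<in> auto (free_group n) \<Longrightarrow> bij_betw \<Phi> (carrier (free_group n)) (carrier (free_group n))"
  by (simp add: auto_def Bij_def)

lemma auto_Aut: "\<Phi> \<in> auto (free_group n) \<Longrightarrow> \<Phi> \<in> Aut n"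
  by (simp add: Aut_def iso_def auto_hom auto_bij)

definition hact :: "nat \<Rightarrow> (word \<Rightarrow> word) \<Rightarrow> (word \<Rightarrow> int) \<Rightarrow> (word \<Rightarrow> int)" where
  "hact n \<Phi> f = restrict (f \<circ> \<Phi>) (carrier (free_group n))"

lemma hact_one: "f \<in> extensional (carrier (free_group n)) \<Longrightarrow> hact n \<one>\<^bsub>AG n\<^esub> f = f"
  unfolding hact_def one_AG by (rule extensionalityI[where A = "carrier (free_group n)"]) auto

lemma hact_mult: "\<Phi> \<in> auto (free_group n) \<Longrightarrow> \<Psi> \<in> auto (free_group n) \<Longrightarrow>
   hact n \<Psi> (hact n \<Phi> f) = hact n (\<Phi> \<otimes>\<^bsub>AG n\<^esub> \<Psi>) f"
  unfolding hact_def mult_AG by (rule restrict_ext) (simp add: auto_carrier compose_def)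

definition reach :: "nat \<Rightarrow> (word \<Rightarrow> int) \<Rightarrow> (word \<Rightarrow> int) \<Rightarrow> bool" where
  "reach n f g \<longleftrightarrow> (\<exists>\<Phi>\<in>auto (free_group n). g = hact n \<Phi> f)"

lemma reach_refl: "f \<in> extensional (carrier (free_group n)) \<Longrightarrow> reach n f f"
  unfolding reach_def using hact_one[of f n] monoid.one_closed[OF group.is_monoid[OF group_AG], of n] carrier_AG by metis

lemma reach_trans: "reach n f g \<Longrightarrow> reach n g h \<Longrightarrow> reach n f h"
  unfolding reach_def using hact_mult monoid.m_closed[OF group.is_monoid[OF group_AG]] carrier_AG by metis

section \<open>Transvections\<close>

definition tvs :: "nat \<Rightarrow> nat \<Rightarrow> bool \<Rightarrow> letter \<Rightarrow> word" where
  "tvs i j s a = (if a = (i, True) then [(i, True), (j, s)] else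
                  if a = (i, False) then [(j, \<not> s), (i, False)] else [a])"

lemma flipc_tvs: "flipc (tvs i j s)"
  unfolding flipc_def
proof
  fix a :: letter
  obtain k b where a: "a = (k, b)" by (cases a)
  show "tvs i j s (flip a) = inv_w (tvs i j s a)"
    using a by (cases b) (auto simp: tvs_def flip_def)
qed

lemma LF_tvs: "i < n \<Longrightarrow> j < n \<Longrightarrow> fst a < n \<Longrightarrow> LF n (tvs i j s a)"
  by (auto simp: tvs_def LF_def)

lemma tvs_inv: "i \<noteq> j \<Longrightarrow> subst (tvs i j s) (tvs i j (\<not> s) a) = [a]"
proof -
  assume ij: "i \<noteq> j"
  obtain k b where a: "a = (k, b)" by (cases a)
  show ?thesis
  proof (cases "k = i")
    case True
    then show ?thesis using a ij
      by (cases b) (simp_all add: tvs_def subst_def reduce_def red_cons_def flip_def)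
  next
    case False
    then show ?thesis using a
      by (simp add: tvs_def subst_def reduce_def red_cons_def)
  qed
qed

definition tv :: "nat \<Rightarrow> nat \<Rightarrow> nat \<Rightarrow> word \<Rightarrow> word" where
  "tv n i j = restrict (subst (tvs i j True)) (carrier (free_group n))"

lemma tv_auto: "i < n \<Longrightarrow> j < n \<Longrightarrow> i \<noteq> j \<Longrightarrow> tv n i j \<in> auto (free_group n)"
  unfolding tv_def
  by (rule subst_auto[where \<tau> = "tvs i j False"])
     (auto simp: flipc_tvs LF_tvs dest: tvs_inv[where s = True] tvs_inv[where s = False])

lemma wsum_tvs: "i \<noteq> j \<Longrightarrow> v' = v(i := v i + v j) \<Longrightarrow> wsum v (tvs i j True a) = wt v' a"
  by (cases a) (auto simp: tvs_def wt_def)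

lemma wsum_subst_tv: "i \<noteq> j \<Longrightarrow> wsum v (subst (tvs i j True) w) = wsum (v(i := v i + v j)) w"
proof -
  assume ij: "i \<noteq> j"
  define v' where "v' = v(i := v i + v j)"
  have "wsum v (concat (map (tvs i j True) w)) = wsum v' w"
    by (induction w) (simp_all add: wsum_tvs[OF ij v'_def])
  then show ?thesis by (simp add: subst_def v'_def)
qed

lemma reach_tv: "i < n \<Longrightarrow> j < n \<Longrightarrow> i \<noteq> j \<Longrightarrow> reach n (hw n p v) (hw n p (v(i := v i + v j)))"
  unfolding reach_def
proof (rule bexI[OF _ tv_auto])
  assume ij: "i < n" "j < n" "i \<noteq> j"
  show "hw n p (v(i := v i + v j)) = hact n (tv n i j) (hw n p v)"
    unfolding hact_def hw_def[of n p "v(i := v i + v j)"]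
  proof (rule restrict_ext)
    fix w assume w: "w \<in> carrier (free_group n)"
    have "tv n i j w \<in> carrier (free_group n)" using tv_auto[OF ij] w by (rule auto_carrier)
    then show "wsum (v(i := v i + v j)) w mod int p = (hw n p v \<circ> tv n i j) w"
      using w ij by (simp add: hw_def tv_def wsum_subst_tv)
  qed
qed

lemma reach_tv_iter:
  assumes "i < n" "j < n" "i \<noteq> j"
  shows "reach n (hw n p v) (hw n p (v(i := v i + int m * v j)))"
proof (induction m)
  case 0
  then show ?case by (simp add: reach_refl hw_ext)
next
  case (Suc m)
  define v1 where "v1 = v(i := v i + int m * v j)"
  have r1: "reach n (hw n p v) (hw n p v1)" using Suc.IH by (simp only: v1_def)
  have eq: "v1(i := v1 i + v1 j) = v(i := v i + int (Suc m) * v j)"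
    using assms(3) by (simp add: v1_def algebra_simps)
  have "reach n (hw n p v1) (hw n p (v(i := v i + int (Suc m) * v j)))"
    using reach_tv[OF assms, of p v1] unfolding eq .
  then show ?case using r1 reach_trans by blast
qed

lemma reach_set:
  assumes "Factorial_Ring.prime p" "i < n" "j < n" "i \<noteq> j" "v j mod int p \<noteq> 0"
  shows "\<exists>v'. reach n (hw n p v) (hw n p v') \<and> v' i mod int p = t mod int p \<and> (\<forall>k. k \<noteq> i \<longrightarrow> v' k = v k)"
proof -
  obtain m :: nat where m: "(v i + int m * v j) mod int p = t mod int p"
    using solve_mod[OF assms(1,5)] by blast
  show ?thesis
    by (rule exI[where x = "v(i := v i + int m * v j)"])
       (simp add: m reach_tv_iter[OF assms(2,3,4)])
qed

definition e1 :: "nat \<Rightarrow> int" where "e1 k = (if k = 0 then 1 else 0)"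

lemma reach_e1:
  assumes p: "Factorial_Ring.prime p" and n: "n \<ge> 2" and j: "j < n" "v j mod int p \<noteq> 0"
  shows "reach n (hw n p v) (hw n p e1)"
proof -
  have p1: "int p > 1" using p prime_gt_1_nat by simp
  then have one: "(1::int) mod int p = 1" by simp
  have "\<exists>v1. reach n (hw n p v) (hw n p v1) \<and> v1 0 mod int p = 1"
  proof (cases "j = 0")
    case False
    then show ?thesis using reach_set[OF p, of 0 n j v 1] j one by auto
  next
    case True
    obtain v' where v': "reach n (hw n p v) (hw n p v')" "v' 1 mod int p = 1 mod int p" "\<forall>k. k \<noteq> 1 \<longrightarrow> v' k = v k"
      using reach_set[OF p, of 1 n j v 1] j n True by auto
    obtain v'' where v'': "reach n (hw n p v') (hw n p v'')" "v'' 0 mod int p = 1 mod int p"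
      using reach_set[OF p, of 0 n 1 v' 1] n v'(2) one by auto
    show ?thesis using v' v'' reach_trans one by metis
  qed
  then obtain v1 where v1: "reach n (hw n p v) (hw n p v1)" "v1 0 mod int p = 1" by blast
  have "K \<le> n \<Longrightarrow> \<exists>v2. reach n (hw n p v) (hw n p v2) \<and> v2 0 mod int p = 1 \<and>
          (\<forall>k. 0 < k \<and> k < K \<longrightarrow> v2 k mod int p = 0)" for K
  proof (induction K)
    case 0 then show ?case using v1 by auto
  next
    case (Suc K)
    then obtain v2 where v2: "reach n (hw n p v) (hw n p v2)" "v2 0 mod int p = 1"
      "\<forall>k. 0 < k \<and> k < K \<longrightarrow> v2 k mod int p = 0" by auto
    show ?case
    proof (cases "K = 0")
      case True then show ?thesis using v2 by auto
    next
      case False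
      have "v2 0 mod int p \<noteq> 0" using v2(2) by simp
      then obtain v3 where v3: "reach n (hw n p v2) (hw n p v3)" "v3 K mod int p = 0 mod int p"
        "\<forall>k. k \<noteq> K \<longrightarrow> v3 k = v2 k"
        using reach_set[OF p, of K n 0 v2 0] Suc.prems False by auto
      have "\<forall>k. 0 < k \<and> k < Suc K \<longrightarrow> v3 k mod int p = 0"
        using v2(3) v3(2,3) by (metis less_Suc_eq mod_0)
      moreover have "v3 0 mod int p = 1" using v3(3) v2(2) False by metis
      ultimately show ?thesis using v2(1) v3(1) reach_trans by blast
    qed
  qed
  then obtain v2 where v2: "reach n (hw n p v) (hw n p v2)" "v2 0 mod int p = 1"
          "\<forall>k. 0 < k \<and> k < n \<longrightarrow> v2 k mod int p = 0" by blast
  have "hw n p v2 = hw n p e1"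
    by (rule hw_cong) (use v2(2,3) one in \<open>auto simp: e1_def\<close>)
  then show ?thesis using v2(1) by simp
qed

definition nthom :: "nat \<Rightarrow> nat \<Rightarrow> (word \<Rightarrow> int) \<Rightarrow> bool" where
  "nthom n p f \<longleftrightarrow> f \<in> hom (free_group n) (integer_mod_group p) \<and> f \<in> extensional (carrier (free_group n))
     \<and> (\<exists>w\<in>carrier (free_group n). f w \<noteq> 0)"

lemma nontriv_homs_nthom: "nontriv_homs n p = {f. nthom n p f}"
  by (auto simp: nontriv_homs_def nthom_def)

lemma nthom_gen:
  assumes "p > 0" "nthom n p f"
  shows "\<exists>j<n. f [(j, True)] mod int p \<noteq> 0"
proof (rule ccontr)
  assume "\<not> ?thesis"
  then have "hw n p (\<lambda>i. f [(i, True)]) = hw n p (\<lambda>i. 0)"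
    by (intro hw_cong) simp
  moreover have "f = hw n p (\<lambda>i. f [(i, True)])"
    using assms by (intro hom_is_hw) (auto simp: nthom_def)
  moreover have "wsum (\<lambda>i. 0) w = 0" for w by (induction w) (simp_all add: wt_def)
  ultimately have "\<forall>w\<in>carrier (free_group n). f w = 0" by (simp add: hw_def)
  then show False using assms(2) by (auto simp: nthom_def)
qed

lemma reach_sym:
  assumes "f \<in> extensional (carrier (free_group n))" "reach n f g"
  shows "reach n g f"
proof -
  obtain \<Phi> where \<Phi>: "\<Phi> \<in> auto (free_group n)" "g = hact n \<Phi> f" using assms(2) reach_def by blast
  interpret G: group "AG n" by (rule group_AG)
  have i: "inv\<^bsub>AG n\<^esub> \<Phi> \<in> auto (free_group n)" using \<Phi>(1) carrier_AG G.inv_closed by metis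
  have "hact n (inv\<^bsub>AG n\<^esub> \<Phi>) g = hact n (\<Phi> \<otimes>\<^bsub>AG n\<^esub> inv\<^bsub>AG n\<^esub> \<Phi>) f"
    using \<Phi> i hact_mult by simp
  also have "\<dots> = f" using \<Phi>(1) carrier_AG G.r_inv hact_one[OF assms(1)] by metis
  finally show ?thesis using i reach_def by metis
qed

lemma nthom_reach:
  assumes p: "Factorial_Ring.prime p" and n: "n \<ge> 2" and f: "nthom n p f" and g: "nthom n p g"
  shows "reach n f g"
proof -
  have p0: "p > 0" using p prime_gt_0_nat by blast
  have "reach n f (hw n p e1)" if nf: "nthom n p f" for f
  proof -
    obtain j where j: "j < n" "f [(j, True)] mod int p \<noteq> 0" using nthom_gen[OF p0 nf] by blast
    have "f = hw n p (\<lambda>i. f [(i, True)])"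
      using nf p0 by (intro hom_is_hw) (auto simp: nthom_def)
    then show ?thesis using reach_e1[OF p n j(1), of "\<lambda>i. f [(i, True)]"] j(2) by simp
  qed
  then have "reach n f (hw n p e1)" "reach n g (hw n p e1)" using f g by auto
  then show ?thesis using reach_sym[of g n] reach_trans hw_ext g nthom_def by metis
qed

lemma hact_nthom:
  assumes "nthom n p f" "\<Phi> \<in> auto (free_group n)"
  shows "nthom n p (hact n \<Phi> f)"
proof -
  have h: "f \<circ> \<Phi> \<in> hom (free_group n) (integer_mod_group p)"
    using assms by (intro hom_compose[OF auto_hom]) (auto simp: nthom_def)
  have "hact n \<Phi> f \<in> hom (free_group n) (integer_mod_group p)"
    unfolding hact_def by (rule group.hom_restrict[OF group_free h]) simp
  moreover have "hact n \<Phi> f \<in> extensional (carrier (free_group n))" by (simp add: hact_def)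
  moreover obtain w where w: "w \<in> carrier (free_group n)" "f w \<noteq> 0" using assms(1) nthom_def by blast
  moreover obtain u where "u \<in> carrier (free_group n)" "\<Phi> u = w"
    using auto_bij[OF assms(2)] w(1) by (metis bij_betw_iff_bijections)
  ultimately show ?thesis unfolding nthom_def by (metis hact_def comp_apply restrict_apply')
qed

lemma finite_nthom:
  assumes "p > 0"
  shows "finite {f. nthom n p f}"
proof -
  have "{f. nthom n p f} \<subseteq> hw n p ` (PiE {..<n} (\<lambda>_. {0..<int p}))"
  proof
    fix f assume f: "f \<in> {f. nthom n p f}"
    define v where "v = restrict (\<lambda>i. f [(i, True)]) {..<n}"
    have "v \<in> PiE {..<n} (\<lambda>_. {0..<int p})"
    proof -
      have "f [(i, True)] \<in> {0..<int p}" if "i < n" for i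
      proof -
        have "[(i, True)] \<in> carrier (free_group n)" using that by (simp add: carrier_free)
        then show ?thesis using f assms hom_in_carrier[of f] by (force simp: nthom_def carrier_integer_mod_group)
      qed
      then show ?thesis by (simp add: v_def)
    qed
    moreover have "f = hw n p v"
    proof -
      have "f = hw n p (\<lambda>i. f [(i, True)])" using f assms by (intro hom_is_hw) (auto simp: nthom_def)
      also have "\<dots> = hw n p v" by (rule hw_cong) (simp add: v_def)
      finally show ?thesis .
    qed
    ultimately show "f \<in> hw n p ` (PiE {..<n} (\<lambda>_. {0..<int p}))" by blast
  qed
  moreover have "finite (hw n p ` (PiE {..<n} (\<lambda>_. {0..<int p})))"
    by (intro finite_imageI finite_PiE) auto
  ultimately show ?thesis by (rule finite_subset)
qed

section \<open>Abstract double coset counting\<close>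

lemma image_eq_card:
  assumes "\<And>a b. a \<in> G \<Longrightarrow> b \<in> G \<Longrightarrow> f a = f b \<longleftrightarrow> g a = g b"
  shows "bij_betw (\<lambda>y. g (SOME a. a \<in> G \<and> f a = y)) (f ` G) (g ` G)"
proof -
  have sel: "(SOME a. a \<in> G \<and> f a = f b) \<in> G \<and> f (SOME a. a \<in> G \<and> f a = f b) = f b" if "b \<in> G" for b
    by (rule someI[where x = b]) (use that in simp)
  show ?thesis
  proof (rule bij_betw_imageI)
    show "inj_on (\<lambda>y. g (SOME a. a \<in> G \<and> f a = y)) (f ` G)"
    proof (rule inj_onI)
      fix x y assume "x \<in> f ` G" "y \<in> f ` G" and e: "g (SOME a. a \<in> G \<and> f a = x) = g (SOME a. a \<in> G \<and> f a = y)"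
      then obtain a b where ab: "a \<in> G" "b \<in> G" "x = f a" "y = f b" by blast
      then show "x = y" using e sel[OF ab(1)] sel[OF ab(2)] assms by metis
    qed
    show "(\<lambda>y. g (SOME a. a \<in> G \<and> f a = y)) ` f ` G = g ` G"
    proof safe
      fix a assume a: "a \<in> G"
      then show "g (SOME aa. aa \<in> G \<and> f aa = f a) \<in> g ` G" using sel[OF a] assms by blast
      have "g a = g (SOME aa. aa \<in> G \<and> f aa = f a)" using sel[OF a] assms a by metis
      then show "g a \<in> (\<lambda>y. g (SOME a. a \<in> G \<and> f a = y)) ` f ` G" using a by blast
    qed
  qed
qed

locale right_act = group G for G (structure) +
  fixes XA :: "'x \<Rightarrow> 'a \<Rightarrow> 'x" and x0 :: 'x
  assumes act_one: "XA x0 \<one> = x0"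
    and act_mult: "a \<in> carrier G \<Longrightarrow> b \<in> carrier G \<Longrightarrow> XA (XA x0 a) b = XA x0 (a \<otimes> b)"
begin

definition St where "St = {a \<in> carrier G. XA x0 a = x0}"

lemma St_one: "\<one> \<in> St" by (simp add: St_def act_one)

lemma St_mult: "a \<in> St \<Longrightarrow> b \<in> St \<Longrightarrow> a \<otimes> b \<in> St"
  unfolding St_def using act_mult by (metis (mono_tags, lifting) m_closed mem_Collect_eq)

lemma St_inv: "a \<in> St \<Longrightarrow> inv a \<in> St"
proof -
  assume a: "a \<in> St"
  then have ac: "a \<in> carrier G" "XA x0 a = x0" by (simp_all add: St_def)
  have "XA x0 (inv a) = XA (XA x0 a) (inv a)" using ac(2) by simp
  also have "\<dots> = XA x0 (a \<otimes> inv a)" by (rule act_mult) (use ac in simp_all)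
  also have "\<dots> = XA x0 \<one>" using ac by simp
  also have "\<dots> = x0" by (rule act_one)
  finally show ?thesis using ac by (simp add: St_def)
qed

lemma St_carrier: "St \<subseteq> carrier G" by (auto simp: St_def)

lemma X_eq_iff: "a \<in> carrier G \<Longrightarrow> b \<in> carrier G \<Longrightarrow> XA x0 a = XA x0 b \<longleftrightarrow> a \<otimes> inv b \<in> St"
proof
  assume ab: "a \<in> carrier G" "b \<in> carrier G" "XA x0 a = XA x0 b"
  have "XA x0 (a \<otimes> inv b) = XA (XA x0 a) (inv b)" by (rule act_mult[symmetric]) (use ab in simp_all)
  also have "\<dots> = XA (XA x0 b) (inv b)" using ab(3) by simp
  also have "\<dots> = XA x0 (b \<otimes> inv b)" by (rule act_mult) (use ab in simp_all)
  also have "\<dots> = XA x0 \<one>" using ab by simp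
  also have "\<dots> = x0" by (rule act_one)
  finally show "a \<otimes> inv b \<in> St" using ab by (simp add: St_def)
next
  assume ab: "a \<in> carrier G" "b \<in> carrier G" "a \<otimes> inv b \<in> St"
  have "XA x0 a = XA x0 ((a \<otimes> inv b) \<otimes> b)" using ab by (simp add: m_assoc)
  also have "\<dots> = XA (XA x0 (a \<otimes> inv b)) b" using ab by (simp add: act_mult)
  also have "\<dots> = XA x0 b" using ab by (simp add: St_def)
  finally show "XA x0 a = XA x0 b" .
qed

lemma orbit_eq_iff:
  assumes H: "H \<subseteq> carrier G" "\<one> \<in> H" "\<And>a b. a \<in> H \<Longrightarrow> b \<in> H \<Longrightarrow> a \<otimes> b \<in> H" "\<And>a. a \<in> H \<Longrightarrow> inv a \<in> H"
    and ab: "a \<in> carrier G" "b \<in> carrier G"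
  shows "(\<lambda>c. XA (XA x0 a) c) ` H = (\<lambda>c. XA (XA x0 b) c) ` H \<longleftrightarrow> (\<exists>s\<in>St. \<exists>c\<in>H. b = s \<otimes> a \<otimes> c)"
proof -
  have img: "(\<lambda>c. XA (XA x0 a) c) ` H = (\<lambda>c. XA x0 (a \<otimes> c)) ` H" if a: "a \<in> carrier G" for a
    using H(1) a act_mult by (intro image_cong) auto
  show ?thesis
  proof
    assume e: "(\<lambda>c. XA (XA x0 a) c) ` H = (\<lambda>c. XA (XA x0 b) c) ` H"
    have "XA x0 b \<in> (\<lambda>c. XA (XA x0 b) c) ` H" using H(2) ab act_mult[of b \<one>] by (metis image_eqI one_closed r_one)
    then obtain c where c: "c \<in> H" "XA x0 b = XA x0 (a \<otimes> c)" using e img[OF ab(1)] by auto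
    have cc: "c \<in> carrier G" using c H(1) by auto
    then have "b \<otimes> inv (a \<otimes> c) \<in> St" using X_eq_iff[of b "a \<otimes> c"] c ab by simp
    moreover have "b = (b \<otimes> inv (a \<otimes> c)) \<otimes> a \<otimes> c" using ab cc by (simp add: m_assoc inv_mult_group)
    ultimately show "\<exists>s\<in>St. \<exists>c\<in>H. b = s \<otimes> a \<otimes> c" using c(1) by blast
  next
    assume "\<exists>s\<in>St. \<exists>c\<in>H. b = s \<otimes> a \<otimes> c"
    then obtain s c where sc: "s \<in> St" "c \<in> H" "b = s \<otimes> a \<otimes> c" by blast
    have s: "s \<in> carrier G" "XA x0 s = x0" using sc(1) by (auto simp: St_def)
    have cc: "c \<in> carrier G" using sc H(1) by auto
    have "XA x0 (b \<otimes> c') = XA x0 (a \<otimes> (c \<otimes> c'))" if "c' \<in> carrier G" for c'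
    proof -
      have "XA x0 (b \<otimes> c') = XA x0 (s \<otimes> (a \<otimes> (c \<otimes> c')))" using sc(3) s ab cc that by (simp add: m_assoc)
      also have "\<dots> = XA (XA x0 s) (a \<otimes> (c \<otimes> c'))" by (rule act_mult[symmetric]) (use s ab cc that in simp_all)
      also have "\<dots> = XA x0 (a \<otimes> (c \<otimes> c'))" using s by simp
      finally show ?thesis .
    qed
    then have "(\<lambda>c'. XA x0 (b \<otimes> c')) ` H = (\<lambda>c'. XA x0 (a \<otimes> (c \<otimes> c'))) ` H"
      using H(1) by (intro image_cong) auto
    also have "\<dots> = (\<lambda>c'. XA x0 (a \<otimes> c')) ` ((\<lambda>c'. c \<otimes> c') ` H)" by (simp add: image_image)
    also have "(\<lambda>c'. c \<otimes> c') ` H = H"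
    proof
      show "(\<lambda>c'. c \<otimes> c') ` H \<subseteq> H" using H(3) sc(2) by auto
      show "H \<subseteq> (\<lambda>c'. c \<otimes> c') ` H"
      proof
        fix d assume d: "d \<in> H"
        then have "inv c \<otimes> d \<in> H" using H(3,4) sc(2) by blast
        moreover have "d \<in> carrier G" using d H(1) by blast
        then have "c \<otimes> (inv c \<otimes> d) = d" using cc by (simp add: m_assoc[symmetric])
        ultimately show "d \<in> (\<lambda>c'. c \<otimes> c') ` H" by (metis image_eqI)
      qed
    qed
    finally show "(\<lambda>c. XA (XA x0 a) c) ` H = (\<lambda>c. XA (XA x0 b) c) ` H"
      using img[OF ab(1)] img[OF ab(2)] by simp
  qed
qed

end

lemma double_coset_count:
  assumes XA: "right_act G XA x0" and FA: "right_act G FA f0"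
  defines "A \<equiv> {a \<in> carrier G. FA f0 a = f0}" and "S \<equiv> {a \<in> carrier G. XA x0 a = x0}"
  shows "\<exists>h. bij_betw h ((\<lambda>y. (\<lambda>c. XA y c) ` A) ` (XA x0 ` carrier G)) ((\<lambda>f. (\<lambda>s. FA f s) ` S) ` (FA f0 ` carrier G))"
proof -
  interpret XA: right_act G XA x0 by (rule XA)
  interpret FA: right_act G FA f0 by (rule FA)
  have A: "A = FA.St" by (simp add: A_def FA.St_def)
  have S: "S = XA.St" by (simp add: S_def XA.St_def)
  define qA where "qA a = (\<lambda>c. XA (XA x0 a) c) ` A" for a
  define qS where "qS a = (\<lambda>s. FA (FA f0 (inv\<^bsub>G\<^esub> a)) s) ` S" for a
  have 1: "(\<lambda>y. (\<lambda>c. XA y c) ` A) ` (XA x0 ` carrier G) = qA ` carrier G"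
    by (simp add: image_image qA_def)
  have invG: "(\<lambda>a. inv\<^bsub>G\<^esub> a) ` carrier G = carrier G"
  proof
    show "(\<lambda>a. inv\<^bsub>G\<^esub> a) ` carrier G \<subseteq> carrier G" by auto
    show "carrier G \<subseteq> (\<lambda>a. inv\<^bsub>G\<^esub> a) ` carrier G"
    proof
      fix a assume "a \<in> carrier G"
      then have "a = inv\<^bsub>G\<^esub> (inv\<^bsub>G\<^esub> a)" "inv\<^bsub>G\<^esub> a \<in> carrier G" by simp_all
      then show "a \<in> (\<lambda>a. inv\<^bsub>G\<^esub> a) ` carrier G" by blast
    qed
  qed
  have 2: "(\<lambda>f. (\<lambda>s. FA f s) ` S) ` (FA f0 ` carrier G) = qS ` carrier G"
  proof -
    have "FA f0 ` carrier G = FA f0 ` ((\<lambda>a. inv\<^bsub>G\<^esub> a) ` carrier G)" using invG by simp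
    then show ?thesis by (simp add: image_image qS_def)
  qed
  have eq: "qA a = qA b \<longleftrightarrow> qS a = qS b" if ab: "a \<in> carrier G" "b \<in> carrier G" for a b
  proof -
    have "qA a = qA b \<longleftrightarrow> (\<exists>s\<in>S. \<exists>c\<in>A. b = s \<otimes>\<^bsub>G\<^esub> a \<otimes>\<^bsub>G\<^esub> c)"
      unfolding qA_def A S
      by (rule XA.orbit_eq_iff[OF FA.St_carrier FA.St_one FA.St_mult FA.St_inv ab])
    also have "\<dots> \<longleftrightarrow> (\<exists>c\<in>A. \<exists>s\<in>S. inv\<^bsub>G\<^esub> b = c \<otimes>\<^bsub>G\<^esub> inv\<^bsub>G\<^esub> a \<otimes>\<^bsub>G\<^esub> s)"
    proof
      assume "\<exists>s\<in>S. \<exists>c\<in>A. b = s \<otimes>\<^bsub>G\<^esub> a \<otimes>\<^bsub>G\<^esub> c"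
      then obtain s c where sc: "s \<in> S" "c \<in> A" "b = s \<otimes>\<^bsub>G\<^esub> a \<otimes>\<^bsub>G\<^esub> c" by blast
      have cs: "s \<in> carrier G" "c \<in> carrier G" using sc A S XA.St_carrier FA.St_carrier by auto
      have "inv\<^bsub>G\<^esub> b = inv\<^bsub>G\<^esub> c \<otimes>\<^bsub>G\<^esub> inv\<^bsub>G\<^esub> a \<otimes>\<^bsub>G\<^esub> inv\<^bsub>G\<^esub> s"
        using sc(3) cs ab by (simp add: XA.inv_mult_group XA.m_assoc)
      moreover have "inv\<^bsub>G\<^esub> c \<in> A" "inv\<^bsub>G\<^esub> s \<in> S" using sc A S FA.St_inv XA.St_inv by auto
      ultimately show "\<exists>c\<in>A. \<exists>s\<in>S. inv\<^bsub>G\<^esub> b = c \<otimes>\<^bsub>G\<^esub> inv\<^bsub>G\<^esub> a \<otimes>\<^bsub>G\<^esub> s" by blast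
    next
      assume "\<exists>c\<in>A. \<exists>s\<in>S. inv\<^bsub>G\<^esub> b = c \<otimes>\<^bsub>G\<^esub> inv\<^bsub>G\<^esub> a \<otimes>\<^bsub>G\<^esub> s"
      then obtain s c where sc: "s \<in> S" "c \<in> A" "inv\<^bsub>G\<^esub> b = c \<otimes>\<^bsub>G\<^esub> inv\<^bsub>G\<^esub> a \<otimes>\<^bsub>G\<^esub> s" by blast
      have cs: "s \<in> carrier G" "c \<in> carrier G" using sc A S XA.St_carrier FA.St_carrier by auto
      have "b = inv\<^bsub>G\<^esub> (inv\<^bsub>G\<^esub> b)" using ab by simp
      also have "\<dots> = inv\<^bsub>G\<^esub> s \<otimes>\<^bsub>G\<^esub> a \<otimes>\<^bsub>G\<^esub> inv\<^bsub>G\<^esub> c"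
        using sc(3) cs ab by (simp add: XA.inv_mult_group XA.m_assoc)
      finally have "b = inv\<^bsub>G\<^esub> s \<otimes>\<^bsub>G\<^esub> a \<otimes>\<^bsub>G\<^esub> inv\<^bsub>G\<^esub> c" .
      moreover have "inv\<^bsub>G\<^esub> c \<in> A" "inv\<^bsub>G\<^esub> s \<in> S" using sc A S FA.St_inv XA.St_inv by auto
      ultimately show "\<exists>s\<in>S. \<exists>c\<in>A. b = s \<otimes>\<^bsub>G\<^esub> a \<otimes>\<^bsub>G\<^esub> c" by blast
    qed
    also have "\<dots> \<longleftrightarrow> qS a = qS b"
      unfolding qS_def A S
      by (rule FA.orbit_eq_iff[OF XA.St_carrier XA.St_one XA.St_mult XA.St_inv, symmetric]) (use ab in simp_all)
    finally show ?thesis .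
  qed
  show ?thesis unfolding 1 2 using image_eq_card[of "carrier G" qA qS] eq by blast
qed

abbreviation FG :: "nat \<Rightarrow> word monoid" where "FG n \<equiv> free_group n"
abbreviation ZP :: "nat \<Rightarrow> int monoid" where "ZP p \<equiv> integer_mod_group p"

lemma Aut_carrier: "\<Phi> \<in> Aut n \<Longrightarrow> w \<in> carrier (FG n) \<Longrightarrow> \<Phi> w \<in> carrier (FG n)"
  unfolding Aut_def iso_def by (blast intro: hom_in_carrier)

lemma Aut_restrict_auto: "\<Phi> \<in> Aut n \<Longrightarrow> restrict \<Phi> (carrier (FG n)) \<in> auto (FG n)"
proof -
  assume a: "\<Phi> \<in> Aut n"
  have h: "\<Phi> \<in> hom (FG n) (FG n)" "bij_betw \<Phi> (carrier (FG n)) (carrier (FG n))"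
    using a by (auto simp: Aut_def iso_def)
  have "restrict \<Phi> (carrier (FG n)) \<in> hom (FG n) (FG n)"
    by (rule group.hom_restrict[OF group_free h(1)]) (rule restrict_apply'[symmetric])
  moreover have "bij_betw (restrict \<Phi> (carrier (FG n))) (carrier (FG n)) (carrier (FG n))"
    using h(2) by (subst bij_betw_cong[where g = \<Phi>]) (rule restrict_apply', assumption)
  ultimately show ?thesis unfolding auto_def Bij_def by (simp add: restrict_extensional)
qed

lemma out_class_restrict: "out_class n (restrict \<Phi> (carrier (FG n))) = out_class n \<Phi>"
  unfolding out_class_def by auto

lemma Out_eq: "Out n = out_class n ` auto (FG n)"
proof
  show "Out n \<subseteq> out_class n ` auto (FG n)"
    unfolding Out_def using Aut_restrict_auto out_class_restrict by (metis image_subsetI imageI)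
  show "out_class n ` auto (FG n) \<subseteq> Out n"
    unfolding Out_def using auto_Aut by blast
qed

lemma conj_free: "g \<in> carrier (FG n) \<Longrightarrow> x \<in> carrier (FG n) \<Longrightarrow>
  g \<otimes>\<^bsub>FG n\<^esub> x \<otimes>\<^bsub>FG n\<^esub> inv\<^bsub>FG n\<^esub> g \<in> carrier (FG n)"
  using group_free by (simp add: group.inv_closed monoid.m_closed group.is_monoid)

lemma self_out_class: "\<Phi> \<in> Aut n \<Longrightarrow> \<Phi> \<in> out_class n \<Phi>"
proof -
  assume a: "\<Phi> \<in> Aut n"
  interpret F: group "FG n" by (rule group_free)
  have "\<forall>w\<in>carrier (FG n). \<Phi> w = \<one>\<^bsub>FG n\<^esub> \<otimes>\<^bsub>FG n\<^esub> \<Phi> w \<otimes>\<^bsub>FG n\<^esub> inv\<^bsub>FG n\<^esub> \<one>\<^bsub>FG n\<^esub>"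
    using Aut_carrier[OF a] by simp
  then show ?thesis unfolding out_class_def using a F.one_closed by blast
qed

lemma out_classE:
  assumes "\<Phi> \<in> out_class n \<Phi>0"
  obtains g where "\<Phi> \<in> Aut n" "g \<in> carrier (FG n)"
    "\<And>w. w \<in> carrier (FG n) \<Longrightarrow> \<Phi> w = g \<otimes>\<^bsub>FG n\<^esub> \<Phi>0 w \<otimes>\<^bsub>FG n\<^esub> inv\<^bsub>FG n\<^esub> g"
  using assms unfolding out_class_def by blast

lemma out_rep_mem: "\<Phi>0 \<in> Aut n \<Longrightarrow> out_rep (out_class n \<Phi>0) \<in> out_class n \<Phi>0"
  unfolding out_rep_def using self_out_class by (metis someI)

lemma Out_rep_Aut: "\<phi> \<in> Out n \<Longrightarrow> out_rep \<phi> \<in> Aut n"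
  unfolding Out_def using out_rep_mem out_classE by (metis image_iff)

section \<open>Homomorphisms to Z/p are conjugation invariant\<close>

lemma hom_conj:
  assumes f: "f \<in> hom (FG n) (ZP p)" and g: "g \<in> carrier (FG n)" and x: "x \<in> carrier (FG n)"
  shows "f (g \<otimes>\<^bsub>FG n\<^esub> x \<otimes>\<^bsub>FG n\<^esub> inv\<^bsub>FG n\<^esub> g) = f x"
proof -
  interpret F: group "FG n" by (rule group_free)
  interpret Z: comm_group "ZP p" by simp
  interpret h: group_hom "FG n" "ZP p" f
    using f by (simp add: group_hom_def group_hom_axioms_def group_free)
  have fg: "f g \<in> carrier (ZP p)" "f x \<in> carrier (ZP p)" using g x by simp_all
  have "f (g \<otimes>\<^bsub>FG n\<^esub> x \<otimes>\<^bsub>FG n\<^esub> inv\<^bsub>FG n\<^esub> g) = f g \<otimes>\<^bsub>ZP p\<^esub> f x \<otimes>\<^bsub>ZP p\<^esub> inv\<^bsub>ZP p\<^esub> f g"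
    using g x by simp
  also have "\<dots> = f x \<otimes>\<^bsub>ZP p\<^esub> f g \<otimes>\<^bsub>ZP p\<^esub> inv\<^bsub>ZP p\<^esub> f g"
    using Z.m_comm[OF fg(1) fg(2)] by (rule arg_cong[where f = "\<lambda>z. z \<otimes>\<^bsub>ZP p\<^esub> inv\<^bsub>ZP p\<^esub> f g"])
  also have "\<dots> = f x \<otimes>\<^bsub>ZP p\<^esub> (f g \<otimes>\<^bsub>ZP p\<^esub> inv\<^bsub>ZP p\<^esub> f g)"
    by (rule Z.m_assoc[OF fg(2) fg(1) Z.inv_closed[OF fg(1)]])
  also have "\<dots> = f x \<otimes>\<^bsub>ZP p\<^esub> \<one>\<^bsub>ZP p\<^esub>" by (simp only: Z.r_inv[OF fg(1)])
  also have "\<dots> = f x" by (rule Z.r_one[OF fg(2)])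
  finally show ?thesis .
qed

lemma hom_out_class:
  assumes f: "f \<in> hom (FG n) (ZP p)" and \<Phi>: "\<Phi> \<in> out_class n \<Phi>0" and \<Phi>0: "\<Phi>0 \<in> Aut n"
    and w: "w \<in> carrier (FG n)"
  shows "f (\<Phi> w) = f (\<Phi>0 w)"
proof -
  obtain g where g: "g \<in> carrier (FG n)"
    "\<And>w. w \<in> carrier (FG n) \<Longrightarrow> \<Phi> w = g \<otimes>\<^bsub>FG n\<^esub> \<Phi>0 w \<otimes>\<^bsub>FG n\<^esub> inv\<^bsub>FG n\<^esub> g"
    using out_classE[OF \<Phi>] by metis
  show ?thesis using g(2)[OF w] hom_conj[OF f g(1) Aut_carrier[OF \<Phi>0 w]] by simp
qed

lemma hom_act_class:
  assumes f: "f \<in> hom (FG n) (ZP p)" and \<Phi>0: "\<Phi>0 \<in> auto (FG n)"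
  shows "hom_act n (out_class n \<Phi>0) f = hact n \<Phi>0 f"
  unfolding hom_act_def hact_def
proof (rule restrict_ext)
  fix w assume w: "w \<in> carrier (FG n)"
  have a: "\<Phi>0 \<in> Aut n" by (rule auto_Aut[OF \<Phi>0])
  show "(f \<circ> out_rep (out_class n \<Phi>0)) w = (f \<circ> \<Phi>0) w"
    using hom_out_class[OF f out_rep_mem[OF a] a w] by simp
qed

lemma lcoset_ker:
  assumes f: "f \<in> hom (FG n) (ZP p)" and p: "p > 0" and N: "N = {w \<in> carrier (FG n). f w = 0}"
    and t: "t \<in> carrier (FG n)"
  shows "t <#\<^bsub>FG n\<^esub> N = {w \<in> carrier (FG n). f w = f t}"
proof -
  interpret F: group "FG n" by (rule group_free)
  interpret Z: group "ZP p" by simp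
  interpret h: group_hom "FG n" "ZP p" f
    using f by (simp add: group_hom_def group_hom_axioms_def group_free)
  show ?thesis
  proof
    show "t <#\<^bsub>FG n\<^esub> N \<subseteq> {w \<in> carrier (FG n). f w = f t}"
    proof
      fix w assume "w \<in> t <#\<^bsub>FG n\<^esub> N"
      then obtain k where k: "k \<in> N" "w = t \<otimes>\<^bsub>FG n\<^esub> k" by (auto simp: l_coset_def)
      have kc: "k \<in> carrier (FG n)" "f k = \<one>\<^bsub>ZP p\<^esub>" using k N by auto
      have "f w = f t \<otimes>\<^bsub>ZP p\<^esub> f k" using k t kc by simp
      also have "\<dots> = f t \<otimes>\<^bsub>ZP p\<^esub> \<one>\<^bsub>ZP p\<^esub>" by (simp only: kc(2))
      also have "\<dots> = f t" by (rule Z.r_one) (simp add: t)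
      finally show "w \<in> {w \<in> carrier (FG n). f w = f t}" using k(2) t kc by simp
    qed
    show "{w \<in> carrier (FG n). f w = f t} \<subseteq> t <#\<^bsub>FG n\<^esub> N"
    proof
      fix w assume w: "w \<in> {w \<in> carrier (FG n). f w = f t}"
      define k where "k = inv\<^bsub>FG n\<^esub> t \<otimes>\<^bsub>FG n\<^esub> w"
      have kc: "k \<in> carrier (FG n)" using w t by (simp add: k_def)
      have "f k = inv\<^bsub>ZP p\<^esub> f t \<otimes>\<^bsub>ZP p\<^esub> f w" using w t by (simp add: k_def)
      also have "\<dots> = \<one>\<^bsub>ZP p\<^esub>" using w t by (simp only: mem_Collect_eq) (rule Z.l_inv, simp)
      finally have "k \<in> N" using N kc by simp
      moreover have "w = t \<otimes>\<^bsub>FG n\<^esub> k" using w t by (simp add: k_def F.m_assoc[symmetric])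
      ultimately show "w \<in> t <#\<^bsub>FG n\<^esub> N" by (auto simp: l_coset_def)
    qed
  qed
qed

lemma auto_level_set:
  assumes \<Phi>: "\<Phi> \<in> Aut n" and iv: "\<forall>w\<in>carrier (FG n). f (\<Phi> w) = f w"
  shows "\<Phi> ` {w \<in> carrier (FG n). f w = c} = {w \<in> carrier (FG n). f w = c}"
proof (rule equalityI)
  show "\<Phi> ` {w \<in> carrier (FG n). f w = c} \<subseteq> {w \<in> carrier (FG n). f w = c}"
  proof
    fix x assume "x \<in> \<Phi> ` {w \<in> carrier (FG n). f w = c}"
    then obtain w where w: "w \<in> carrier (FG n)" "f w = c" "x = \<Phi> w" by blast
    have "f (\<Phi> w) = f w" by (rule bspec[OF iv w(1)])
    then show "x \<in> {w \<in> carrier (FG n). f w = c}" using Aut_carrier[OF \<Phi> w(1)] w by simp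
  qed
  show "{w \<in> carrier (FG n). f w = c} \<subseteq> \<Phi> ` {w \<in> carrier (FG n). f w = c}"
  proof
    fix w assume w: "w \<in> {w \<in> carrier (FG n). f w = c}"
    have "bij_betw \<Phi> (carrier (FG n)) (carrier (FG n))" using \<Phi> by (simp add: Aut_def iso_def)
    then have "\<Phi> ` carrier (FG n) = carrier (FG n)" by (rule bij_betw_imp_surj_on)
    moreover have "w \<in> carrier (FG n)" using w by simp
    ultimately have "w \<in> \<Phi> ` carrier (FG n)" by simp
    then obtain u where u: "u \<in> carrier (FG n)" "\<Phi> u = w" by (rule imageE) simp
    have "f u = f (\<Phi> u)" using bspec[OF iv u(1)] by simp
    then have "f u = c" using u(2) w by simp
    then show "w \<in> \<Phi> ` {w \<in> carrier (FG n). f w = c}" using u by blast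
  qed
qed

lemma coset_pres_iff:
  assumes f: "f \<in> hom (FG n) (ZP p)" and p: "p > 0" and N: "N = {w \<in> carrier (FG n). f w = 0}"
    and \<Phi>: "\<Phi> \<in> Aut n"
  shows "(\<Phi> ` N = N \<and> (\<forall>t\<in>carrier (FG n). \<Phi> ` (t <#\<^bsub>FG n\<^esub> N) = t <#\<^bsub>FG n\<^esub> N))
     \<longleftrightarrow> (\<forall>w\<in>carrier (FG n). f (\<Phi> w) = f w)"
proof
  assume a: "\<forall>w\<in>carrier (FG n). f (\<Phi> w) = f w"
  show "\<Phi> ` N = N \<and> (\<forall>t\<in>carrier (FG n). \<Phi> ` (t <#\<^bsub>FG n\<^esub> N) = t <#\<^bsub>FG n\<^esub> N)"
  proof
    have L: "\<And>c. \<Phi> ` {w \<in> carrier (FG n). f w = c} = {w \<in> carrier (FG n). f w = c}"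
      by (rule auto_level_set[OF \<Phi> a])
    show "\<Phi> ` N = N" unfolding N by (rule L)
    show "\<forall>t\<in>carrier (FG n). \<Phi> ` (t <#\<^bsub>FG n\<^esub> N) = t <#\<^bsub>FG n\<^esub> N"
    proof
      fix t assume t: "t \<in> carrier (FG n)"
      show "\<Phi> ` (t <#\<^bsub>FG n\<^esub> N) = t <#\<^bsub>FG n\<^esub> N"
        unfolding lcoset_ker[OF f p N t] by (rule L)
    qed
  qed
next
  assume a: "\<Phi> ` N = N \<and> (\<forall>t\<in>carrier (FG n). \<Phi> ` (t <#\<^bsub>FG n\<^esub> N) = t <#\<^bsub>FG n\<^esub> N)"
  show "\<forall>w\<in>carrier (FG n). f (\<Phi> w) = f w"
  proof
    fix w assume w: "w \<in> carrier (FG n)"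
    have "w \<in> {u \<in> carrier (FG n). f u = f w}" using w by simp
    then have "\<Phi> w \<in> \<Phi> ` (w <#\<^bsub>FG n\<^esub> N)" using lcoset_ker[OF f p N w] by blast
    then have "\<Phi> w \<in> w <#\<^bsub>FG n\<^esub> N" using a w by simp
    then show "f (\<Phi> w) = f w" using lcoset_ker[OF f p N w] by simp
  qed
qed

lemma coset_stab_eq:
  assumes f: "f \<in> hom (FG n) (ZP p)" "f \<in> extensional (carrier (FG n))" and p: "p > 0"
    and N: "N = {w \<in> carrier (FG n). f w = 0}"
  shows "coset_stab n N = {\<phi> \<in> Out n. hom_act n \<phi> f = f}"
proof -
  have "\<phi> \<in> coset_stab n N \<longleftrightarrow> hom_act n \<phi> f = f" if \<phi>: "\<phi> \<in> Out n" for \<phi>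
  proof -
    obtain \<Phi>0 where \<Phi>0: "\<Phi>0 \<in> auto (FG n)" "\<phi> = out_class n \<Phi>0" using \<phi> Out_eq by blast
    have a0: "\<Phi>0 \<in> Aut n" using \<Phi>0 auto_Aut by blast
    have aut: "\<Phi> \<in> Aut n" if "\<Phi> \<in> \<phi>" for \<Phi> using that \<Phi>0(2) by (simp add: out_class_def)
    have "\<phi> \<in> coset_stab n N \<longleftrightarrow> (\<forall>\<Phi>\<in>\<phi>. \<Phi> ` N = N \<and> (\<forall>t\<in>carrier (FG n). \<Phi> ` (t <#\<^bsub>FG n\<^esub> N) = t <#\<^bsub>FG n\<^esub> N))"
      using \<phi> by (simp add: coset_stab_def)
    also have "\<dots> \<longleftrightarrow> (\<forall>\<Phi>\<in>\<phi>. \<forall>w\<in>carrier (FG n). f (\<Phi> w) = f w)"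
      by (intro ball_cong refl) (rule coset_pres_iff[OF f(1) p N aut])
    also have "\<dots> \<longleftrightarrow> (\<forall>w\<in>carrier (FG n). f (\<Phi>0 w) = f w)"
    proof
      assume "\<forall>\<Phi>\<in>\<phi>. \<forall>w\<in>carrier (FG n). f (\<Phi> w) = f w"
      then show "\<forall>w\<in>carrier (FG n). f (\<Phi>0 w) = f w" using self_out_class[OF a0] \<Phi>0(2) by blast
    next
      assume a: "\<forall>w\<in>carrier (FG n). f (\<Phi>0 w) = f w"
      show "\<forall>\<Phi>\<in>\<phi>. \<forall>w\<in>carrier (FG n). f (\<Phi> w) = f w"
      proof (intro ballI)
        fix \<Phi> w assume "\<Phi> \<in> \<phi>" "w \<in> carrier (FG n)"
        then show "f (\<Phi> w) = f w" using hom_out_class[OF f(1) _ a0, of \<Phi> w] \<Phi>0(2) a by simp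
      qed
    qed
    also have "\<dots> \<longleftrightarrow> hact n \<Phi>0 f = f"
    proof
      assume "\<forall>w\<in>carrier (FG n). f (\<Phi>0 w) = f w"
      then show "hact n \<Phi>0 f = f" unfolding hact_def
        by (intro extensionalityI[OF restrict_extensional f(2)]) simp
    next
      assume h: "hact n \<Phi>0 f = f"
      show "\<forall>w\<in>carrier (FG n). f (\<Phi>0 w) = f w"
      proof
        fix w assume w: "w \<in> carrier (FG n)"
        have "hact n \<Phi>0 f w = f w" using h by simp
        then show "f (\<Phi>0 w) = f w" using w by (simp add: hact_def)
      qed
    qed
    also have "\<dots> \<longleftrightarrow> hom_act n \<phi> f = f" using hom_act_class[OF f(1) \<Phi>0(1)] \<Phi>0(2) by simp
    finally show ?thesis .
  qed
  then have eq: "\<And>\<phi>. \<phi> \<in> Out n \<Longrightarrow> \<phi> \<in> coset_stab n N \<longleftrightarrow> hom_act n \<phi> f = f" .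
  have sub: "\<And>\<phi>. \<phi> \<in> coset_stab n N \<Longrightarrow> \<phi> \<in> Out n" by (simp add: coset_stab_def)
  show ?thesis
  proof (rule Set.set_eqI)
    fix \<phi>
    show "\<phi> \<in> coset_stab n N \<longleftrightarrow> \<phi> \<in> {\<phi> \<in> Out n. hom_act n \<phi> f = f}"
      using eq[of \<phi>] sub[of \<phi>] by (simp only: mem_Collect_eq) blast
  qed
qed

definition kap :: "nat \<Rightarrow> (word \<Rightarrow> int) \<Rightarrow> word set \<times> word set" where
  "kap n f = ({w \<in> carrier (FG n). f w = 0}, {w \<in> carrier (FG n). f w = 1})"

lemma nthom_surj:
  assumes p: "Factorial_Ring.prime p" and f: "nthom n p f" and c: "c \<in> {0..<int p}"
  shows "\<exists>w\<in>carrier (FG n). f w = c"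
proof -
  have p0: "p > 0" using p prime_gt_0_nat by blast
  obtain w0 where w0: "w0 \<in> carrier (FG n)" "f w0 \<noteq> 0" using f by (auto simp: nthom_def)
  have fh: "f \<in> hom (FG n) (ZP p)" using f by (simp add: nthom_def)
  have "f w0 \<in> {0..<int p}" using hom_in_carrier[OF fh w0(1)] p0 by (simp add: carrier_integer_mod_group)
  then have "f w0 mod int p \<noteq> 0" using w0(2) by simp
  then obtain m :: nat where m: "(0 + int m * f w0) mod int p = c mod int p"
    using solve_mod[OF p] by blast
  have "f (w0 [^]\<^bsub>FG n\<^esub> m) = f w0 [^]\<^bsub>ZP p\<^esub> m"
    by (rule hom_nat_pow[OF fh w0(1) group_free group_integer_mod_group])
  also have "\<dots> = (int m * f w0) mod int p" by simp
  also have "\<dots> = c" using m c by simp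
  finally have "f (w0 [^]\<^bsub>FG n\<^esub> m) = c" .
  moreover have "w0 [^]\<^bsub>FG n\<^esub> m \<in> carrier (FG n)"
    by (rule monoid.nat_pow_closed[OF group.is_monoid[OF group_free] w0(1)])
  ultimately show ?thesis by blast
qed

lemma pair_act_kap:
  assumes "\<phi> \<in> Out n"
  shows "pair_act n \<phi> (kap n f) = kap n (hom_act n \<phi> f)"
proof -
  have a: "out_rep \<phi> \<in> Aut n" by (rule Out_rep_Aut[OF assms])
  show ?thesis
    unfolding pair_act_def kap_def hom_act_def Let_def fst_conv snd_conv
  proof (rule arg_cong2[where f = Pair])
    show "{w \<in> carrier (FG n). out_rep \<phi> w \<in> {w \<in> carrier (FG n). f w = 0}} =
      {w \<in> carrier (FG n). restrict (f \<circ> out_rep \<phi>) (carrier (FG n)) w = 0}"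
      using Aut_carrier[OF a] by (intro Collect_cong) auto
    show "{w \<in> carrier (FG n). out_rep \<phi> w \<in> {w \<in> carrier (FG n). f w = 1}} =
      {w \<in> carrier (FG n). restrict (f \<circ> out_rep \<phi>) (carrier (FG n)) w = 1}"
      using Aut_carrier[OF a] by (intro Collect_cong) auto
  qed
qed

lemma rcoset_ker:
  assumes f: "f \<in> hom (FG n) (ZP p)" and p: "p > 0" and N: "N = {w \<in> carrier (FG n). f w = 0}"
    and t: "t \<in> carrier (FG n)"
  shows "N #>\<^bsub>FG n\<^esub> t = {w \<in> carrier (FG n). f w = f t}"
proof -
  interpret F: group "FG n" by (rule group_free)
  interpret Z: group "ZP p" by simp
  interpret h: group_hom "FG n" "ZP p" f
    using f by (simp add: group_hom_def group_hom_axioms_def group_free)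
  show ?thesis
  proof (rule equalityI)
    show "N #>\<^bsub>FG n\<^esub> t \<subseteq> {w \<in> carrier (FG n). f w = f t}"
    proof
      fix w assume "w \<in> N #>\<^bsub>FG n\<^esub> t"
      then obtain k where k: "k \<in> N" "w = k \<otimes>\<^bsub>FG n\<^esub> t" by (auto simp: r_coset_def)
      have kc: "k \<in> carrier (FG n)" "f k = \<one>\<^bsub>ZP p\<^esub>" using k N by auto
      have "f w = f k \<otimes>\<^bsub>ZP p\<^esub> f t" using k t kc by simp
      also have "\<dots> = \<one>\<^bsub>ZP p\<^esub> \<otimes>\<^bsub>ZP p\<^esub> f t" by (simp only: kc(2))
      also have "\<dots> = f t" by (rule Z.l_one) (simp add: t)
      finally show "w \<in> {w \<in> carrier (FG n). f w = f t}" using k(2) t kc by simp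
    qed
    show "{w \<in> carrier (FG n). f w = f t} \<subseteq> N #>\<^bsub>FG n\<^esub> t"
    proof
      fix w assume w: "w \<in> {w \<in> carrier (FG n). f w = f t}"
      define k where "k = w \<otimes>\<^bsub>FG n\<^esub> inv\<^bsub>FG n\<^esub> t"
      have kc: "k \<in> carrier (FG n)" using w t by (simp add: k_def)
      have "f k = f w \<otimes>\<^bsub>ZP p\<^esub> inv\<^bsub>ZP p\<^esub> f t" using w t by (simp add: k_def)
      also have "\<dots> = \<one>\<^bsub>ZP p\<^esub>" using w t by (simp only: mem_Collect_eq) (rule Z.r_inv, simp)
      finally have "k \<in> N" using N kc by simp
      moreover have "w = k \<otimes>\<^bsub>FG n\<^esub> t" using w t by (simp add: k_def F.m_assoc)
      ultimately show "w \<in> N #>\<^bsub>FG n\<^esub> t" by (auto simp: r_coset_def)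
    qed
  qed
qed

lemma kap_in:
  assumes p: "Factorial_Ring.prime p" and f: "nthom n p f"
  shows "kap n f \<in> index_p_pairs n p"
proof -
  have p0: "p > 0" using p prime_gt_0_nat by blast
  have p1: "p > 1" using p prime_gt_1_nat by blast
  have fh: "f \<in> hom (FG n) (ZP p)" using f by (simp add: nthom_def)
  interpret h: group_hom "FG n" "ZP p" f
    using fh by (simp add: group_hom_def group_hom_axioms_def group_free)
  define K where "K = {w \<in> carrier (FG n). f w = 0}"
  have K: "K = kernel (FG n) (ZP p) f" by (simp add: K_def kernel_def)
  have surj: "f ` carrier (FG n) = carrier (ZP p)"
  proof
    show "f ` carrier (FG n) \<subseteq> carrier (ZP p)" using fh by (rule hom_carrier)
    show "carrier (ZP p) \<subseteq> f ` carrier (FG n)"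
      using nthom_surj[OF p f] p0 by (force simp: carrier_integer_mod_group)
  qed
  have norm: "K \<lhd> FG n" unfolding K by (rule h.normal_kernel)
  have "(\<lambda>Y. the_elem (f ` Y)) \<in> iso ((FG n) Mod K) (ZP p)" unfolding K by (rule h.FactGroup_iso_set[OF surj])
  then have "card (carrier ((FG n) Mod K)) = card (carrier (ZP p))"
    by (auto simp: iso_def intro: bij_betw_same_card)
  then have card: "card (rcosets\<^bsub>FG n\<^esub> K) = p" using p0 by (simp add: FactGroup_def carrier_integer_mod_group)
  obtain t where t: "t \<in> carrier (FG n)" "f t = 1" using nthom_surj[OF p f, of 1] p1 by auto
  have C: "{w \<in> carrier (FG n). f w = 1} = K #>\<^bsub>FG n\<^esub> t"
    using rcoset_ker[OF fh p0 K_def t(1)] t(2) by simp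
  have "K #>\<^bsub>FG n\<^esub> t \<in> rcosets\<^bsub>FG n\<^esub> K"
    by (rule group.rcosetsI[OF group_free]) (use t in \<open>auto simp: K_def\<close>)
  moreover have "{w \<in> carrier (FG n). f w = 1} \<noteq> K" using t by (auto simp: K_def)
  ultimately show ?thesis
    unfolding index_p_pairs_def kap_def using norm card C K_def by auto
qed

lemma kap_inj:
  assumes p: "Factorial_Ring.prime p"
  shows "inj_on (kap n) {f. nthom n p f}"
proof (rule inj_onI)
  fix f g assume f: "f \<in> {f. nthom n p f}" and g: "g \<in> {f. nthom n p f}" and e: "kap n f = kap n g"
  have p0: "p > 0" using p prime_gt_0_nat by blast
  have p1: "p > 1" using p prime_gt_1_nat by blast
  have fh: "f \<in> hom (FG n) (ZP p)" "f \<in> extensional (carrier (FG n))" using f by (auto simp: nthom_def)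
  have gh: "g \<in> hom (FG n) (ZP p)" "g \<in> extensional (carrier (FG n))" using g by (auto simp: nthom_def)
  interpret F: group "FG n" by (rule group_free)
  interpret Z: group "ZP p" by simp
  interpret hf: group_hom "FG n" "ZP p" f
    using fh by (simp add: group_hom_def group_hom_axioms_def group_free)
  interpret hg: group_hom "FG n" "ZP p" g
    using gh by (simp add: group_hom_def group_hom_axioms_def group_free)
  have e0: "\<And>w. w \<in> carrier (FG n) \<Longrightarrow> f w = 0 \<longleftrightarrow> g w = 0"
    using e unfolding kap_def by (metis (mono_tags, lifting) fst_conv mem_Collect_eq)
  have e1: "\<And>w. w \<in> carrier (FG n) \<Longrightarrow> f w = 1 \<longleftrightarrow> g w = 1"
    using e unfolding kap_def by (metis (mono_tags, lifting) snd_conv mem_Collect_eq)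
  obtain t where t: "t \<in> carrier (FG n)" "f t = 1" using nthom_surj[OF p, of n f 1] f p1 by auto
  have gt: "g t = 1" using e1[OF t(1)] t(2) by simp
  show "f = g"
  proof (rule extensionalityI[OF fh(2) gh(2)])
    fix w assume w: "w \<in> carrier (FG n)"
    define c where "c = f w"
    have c: "c \<in> {0..<int p}" using hf.hom_closed[OF w] p0 by (simp add: c_def carrier_integer_mod_group)
    define u where "u = t [^]\<^bsub>FG n\<^esub> nat c"
    have u: "u \<in> carrier (FG n)" using t by (simp add: u_def)
    have "f u = f t [^]\<^bsub>ZP p\<^esub> nat c" unfolding u_def by (rule hf.hom_nat_pow[OF t(1)])
    then have fu: "f u = c" using t(2) c by simp
    have "g u = g t [^]\<^bsub>ZP p\<^esub> nat c" unfolding u_def by (rule hg.hom_nat_pow[OF t(1)])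
    then have gu: "g u = c" using gt c by simp
    have wu: "w \<otimes>\<^bsub>FG n\<^esub> inv\<^bsub>FG n\<^esub> u \<in> carrier (FG n)" using w u by simp
    have "f (w \<otimes>\<^bsub>FG n\<^esub> inv\<^bsub>FG n\<^esub> u) = f w \<otimes>\<^bsub>ZP p\<^esub> inv\<^bsub>ZP p\<^esub> f u" using w u by simp
    also have "\<dots> = \<one>\<^bsub>ZP p\<^esub>" using fu c_def w by (simp only:) (rule Z.r_inv, simp)
    finally have "g (w \<otimes>\<^bsub>FG n\<^esub> inv\<^bsub>FG n\<^esub> u) = 0" using e0[OF wu] by simp
    then have "g w \<otimes>\<^bsub>ZP p\<^esub> inv\<^bsub>ZP p\<^esub> g u = \<one>\<^bsub>ZP p\<^esub>" using w u by simp
    then have "g w = g u"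
    proof -
      assume a: "g w \<otimes>\<^bsub>ZP p\<^esub> inv\<^bsub>ZP p\<^esub> g u = \<one>\<^bsub>ZP p\<^esub>"
      have gw: "g w \<in> carrier (ZP p)" "g u \<in> carrier (ZP p)" using w u by simp_all
      have "g w = g w \<otimes>\<^bsub>ZP p\<^esub> (inv\<^bsub>ZP p\<^esub> g u \<otimes>\<^bsub>ZP p\<^esub> g u)"
        by (simp only: Z.l_inv[OF gw(2)] Z.r_one[OF gw(1)])
      also have "\<dots> = (g w \<otimes>\<^bsub>ZP p\<^esub> inv\<^bsub>ZP p\<^esub> g u) \<otimes>\<^bsub>ZP p\<^esub> g u"
        by (rule Z.m_assoc[symmetric]) (simp_all only: gw Z.inv_closed)
      also have "\<dots> = g u" by (simp only: a Z.l_one[OF gw(2)])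
      finally show ?thesis .
    qed
    then show "f w = g w" using gu c_def by simp
  qed
qed

lemma mod_range_eq:
  fixes a b :: int
  assumes "int p dvd (b - a)" "a \<in> {0..<int p}" "b \<in> {0..<int p}"
  shows "a = b"
proof -
  have "b mod int p = a mod int p" using assms(1) by (simp add: mod_eq_dvd_iff)
  then show ?thesis using assms(2,3) by simp
qed

lemma kap_onto:
  assumes p: "Factorial_Ring.prime p" and P: "(N', C) \<in> index_p_pairs n p"
  shows "\<exists>f. nthom n p f \<and> kap n f = (N', C)"
proof -
  have p0: "p > 0" using p prime_gt_0_nat by blast
  have p1: "p > 1" using p prime_gt_1_nat by blast
  have norm: "N' \<lhd> FG n" and card: "card (rcosets\<^bsub>FG n\<^esub> N') = p"
    and C: "C \<in> rcosets\<^bsub>FG n\<^esub> N'" and CN: "C \<noteq> N'"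
    using P by (auto simp: index_p_pairs_def)
  interpret F: group "FG n" by (rule group_free)
  interpret N: normal N' "FG n" by (rule norm)
  define Q where "Q = (FG n) Mod N'"
  have gQ: "group Q" unfolding Q_def by (rule N.factorgroup_is_group)
  interpret Q: group Q by (rule gQ)
  have cQ: "carrier Q = rcosets\<^bsub>FG n\<^esub> N'" by (simp add: Q_def FactGroup_def)
  have finQ: "finite (carrier Q)" using card p0 cQ card_ge_0_finite by auto
  have oQ: "order Q = p" using card cQ by (simp add: order_def)
  have Cc: "C \<in> carrier Q" using C cQ by simp
  have C1: "C \<noteq> \<one>\<^bsub>Q\<^esub>" using CN by (simp add: Q_def)
  have "Q.ord C dvd p" using Q.ord_dvd_group_order[OF Cc] oQ by simp
  then have "Q.ord C = 1 \<or> Q.ord C = p" using p by (simp add: prime_nat_iff)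
  then have ordC: "Q.ord C = p" using Q.ord_eq_1[OF Cc] C1 by blast
  define \<psi> where "\<psi> k = C [^]\<^bsub>Q\<^esub> (k::int)" for k
  have \<psi>eq: "\<psi> a = \<psi> b \<longleftrightarrow> int p dvd (b - a)" for a b
    unfolding \<psi>_def using Q.int_pow_eq[OF Cc] ordC by simp
  have \<psi>c: "\<psi> k \<in> carrier Q" for k unfolding \<psi>_def using Cc by simp
  have cZ: "carrier (ZP p) = {0..<int p}" using p0 by (simp add: carrier_integer_mod_group)
  have \<psi>hom: "\<psi> \<in> hom (ZP p) Q"
  proof (rule homI)
    fix a b assume "a \<in> carrier (ZP p)" "b \<in> carrier (ZP p)"
    have "\<psi> ((a + b) mod int p) = \<psi> (a + b)"
      unfolding \<psi>eq by (simp add: mod_eq_dvd_iff[symmetric])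
    also have "\<dots> = \<psi> a \<otimes>\<^bsub>Q\<^esub> \<psi> b" unfolding \<psi>_def by (rule Q.int_pow_mult[OF Cc])
    finally show "\<psi> (a \<otimes>\<^bsub>ZP p\<^esub> b) = \<psi> a \<otimes>\<^bsub>Q\<^esub> \<psi> b" by simp
  qed (rule \<psi>c)
  have \<psi>inj: "inj_on \<psi> {0..<int p}"
  proof (rule inj_onI)
    fix a b assume "a \<in> {0..<int p}" "b \<in> {0..<int p}" "\<psi> a = \<psi> b"
    then show "a = b" using \<psi>eq mod_range_eq by blast
  qed
  have img: "\<psi> ` {0..<int p} = carrier Q"
  proof (rule card_subset_eq[OF finQ])
    show "\<psi> ` {0..<int p} \<subseteq> carrier Q" using \<psi>c by blast
    show "card (\<psi> ` {0..<int p}) = card (carrier Q)"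
      using card_image[OF \<psi>inj] oQ by (simp add: order_def)
  qed
  have \<psi>iso: "\<psi> \<in> iso (ZP p) Q"
    unfolding iso_def using \<psi>hom \<psi>inj img cZ by (simp add: bij_betw_def)
  define \<psi>' where "\<psi>' = inv_into (carrier (ZP p)) \<psi>"
  have \<psi>'iso: "\<psi>' \<in> iso Q (ZP p)" unfolding \<psi>'_def
    by (rule group.iso_set_sym[OF group_integer_mod_group \<psi>iso])
  have \<psi>\<psi>': "\<psi> (\<psi>' y) = y" if "y \<in> carrier Q" for y
    unfolding \<psi>'_def using that img cZ by (simp add: f_inv_into_f)
  have \<psi>'\<psi>: "\<psi>' (\<psi> k) = k" if "k \<in> {0..<int p}" for k
    unfolding \<psi>'_def using that \<psi>inj cZ by (simp add: inv_into_f_f)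
  have \<psi>'c: "\<psi>' y \<in> {0..<int p}" if "y \<in> carrier Q" for y
    using that hom_in_carrier[OF iso_imp_homomorphism[OF \<psi>'iso]] cZ by blast
  have key: "\<psi>' y = k \<longleftrightarrow> y = \<psi> k" if "y \<in> carrier Q" "k \<in> {0..<int p}" for y k
    using that \<psi>\<psi>' \<psi>'\<psi> by metis
  define f where "f = restrict (\<lambda>w. \<psi>' (N' #>\<^bsub>FG n\<^esub> w)) (carrier (FG n))"
  have rc: "N' #>\<^bsub>FG n\<^esub> w \<in> carrier Q" if "w \<in> carrier (FG n)" for w
    using that cQ F.rcosetsI N.subset by simp
  have h1: "(\<lambda>w. N' #>\<^bsub>FG n\<^esub> w) \<in> hom (FG n) Q" unfolding Q_def by (rule N.r_coset_hom_Mod)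
  have h2: "\<psi>' \<circ> (\<lambda>w. N' #>\<^bsub>FG n\<^esub> w) \<in> hom (FG n) (ZP p)"
    by (rule hom_compose[OF h1 iso_imp_homomorphism[OF \<psi>'iso]])
  have fh: "f \<in> hom (FG n) (ZP p)" unfolding f_def
    by (rule F.hom_restrict[OF h2]) simp
  have \<psi>0: "\<psi> 0 = N'" by (simp add: \<psi>_def Q_def)
  have \<psi>1: "\<psi> 1 = C" by (simp add: \<psi>_def Cc)
  have fk: "f w = k \<longleftrightarrow> N' #>\<^bsub>FG n\<^esub> w = \<psi> k" if "w \<in> carrier (FG n)" "k \<in> {0..<int p}" for w k
    using key[OF rc[OF that(1)] that(2)] that(1) by (simp add: f_def)
  have ker: "{w \<in> carrier (FG n). f w = 0} = N'"
  proof -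
    have "{w \<in> carrier (FG n). f w = 0} = {w \<in> carrier (FG n). N' #>\<^bsub>FG n\<^esub> w = N'}"
      using fk[of _ 0] p0 \<psi>0 by auto
    also have "\<dots> = N'"
      using F.coset_join1[OF _ _ N.subgroup_axioms] F.coset_join2[OF _ N.subgroup_axioms] N.subset by blast
    finally show ?thesis .
  qed
  obtain c where c: "c \<in> carrier (FG n)" "C = N' #>\<^bsub>FG n\<^esub> c" using C by (auto simp: RCOSETS_def)
  have one: "{w \<in> carrier (FG n). f w = 1} = C"
  proof -
    have "{w \<in> carrier (FG n). f w = 1} = {w \<in> carrier (FG n). N' #>\<^bsub>FG n\<^esub> w = C}"
      using fk[of _ 1] p1 \<psi>1 by auto
    also have "\<dots> = C"
    proof (rule equalityI)
      show "{w \<in> carrier (FG n). N' #>\<^bsub>FG n\<^esub> w = C} \<subseteq> C"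
        using F.rcos_self[OF _ N.subgroup_axioms] by blast
      show "C \<subseteq> {w \<in> carrier (FG n). N' #>\<^bsub>FG n\<^esub> w = C}"
      proof
        fix w assume w: "w \<in> C"
        have wc: "w \<in> carrier (FG n)" using w c F.r_coset_subset_G[OF N.subset c(1)] by blast
        have "N' #>\<^bsub>FG n\<^esub> c = N' #>\<^bsub>FG n\<^esub> w"
          using F.repr_independence[OF _ c(1) N.subgroup_axioms] w c(2) by blast
        then show "w \<in> {w \<in> carrier (FG n). N' #>\<^bsub>FG n\<^esub> w = C}" using wc c(2) by simp
      qed
    qed
    finally show ?thesis .
  qed
  have cC: "c \<in> C" using F.rcos_self[OF c(1) N.subgroup_axioms] c(2) by simp
  have "f c = 1" using one cC by blast
  then have "\<exists>w\<in>carrier (FG n). f w \<noteq> 0" using c(1) by force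
  moreover have "f \<in> extensional (carrier (FG n))" by (simp add: f_def)
  ultimately have "nthom n p f" unfolding nthom_def using fh by blast
  moreover have "kap n f = (N', C)" unfolding kap_def using ker one by simp
  ultimately show ?thesis by blast
qed

lemma kap_image:
  assumes p: "Factorial_Ring.prime p"
  shows "kap n ` {f. nthom n p f} = index_p_pairs n p"
proof
  show "kap n ` {f. nthom n p f} \<subseteq> index_p_pairs n p" using kap_in[OF p] by blast
  show "index_p_pairs n p \<subseteq> kap n ` {f. nthom n p f}"
  proof
    fix P assume "P \<in> index_p_pairs n p"
    then obtain N' C where P: "P = (N', C)" "(N', C) \<in> index_p_pairs n p" by (cases P) auto
    obtain f where "nthom n p f" "kap n f = (N', C)" using kap_onto[OF p P(2)] by blast
    then show "P \<in> kap n ` {f. nthom n p f}" using P(1) by (intro image_eqI[of _ _ f]) simp_all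
  qed
qed

section \<open>Marked graphs\<close>

lemma mg_equiv_tuple:
  "mg_equiv n (V, E, src, len, v0, m) (V', E', src', len', v0', m') \<longleftrightarrow>
     valid_mgraph n (V, E, src, len, v0, m) \<and> valid_mgraph n (V', E', src', len', v0', m') \<and>
     (\<exists>hv he \<gamma>. bij_betw hv V V' \<and> bij_betw he (E \<times> UNIV) (E' \<times> UNIV) \<and>
        (\<forall>d\<in>E \<times> UNIV. he (flip d) = flip (he d) \<and> src' (he d) = hv (src d)
                         \<and> len' (fst (he d)) = len (fst d)) \<and>
        is_path E' src' (hv v0) \<gamma> v0' \<and>
        (\<forall>w\<in>carrier (free_group n).
           m' w = reduce (inv_w \<gamma> @ map he (m w) @ \<gamma>)))"
  by (simp add: mg_equiv_def inv_w_def)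

lemma valid_tuple:
  "valid_mgraph n (V, E, src, len, v0, m) \<longleftrightarrow>
     metric_graph V E src len \<and> v0 \<in> V \<and> m \<in> iso (free_group n) (pi1 E src v0)"
  by (simp add: valid_mgraph_def)

lemma valid_m_carrier:
  assumes "valid_mgraph n (V, E, src, len, v0, m)" "w \<in> carrier (FG n)"
  shows "is_path E src v0 (m w) v0" "reduced (m w)"
proof -
  have "m \<in> hom (FG n) (pi1 E src v0)" using assms(1) by (simp add: valid_tuple iso_def)
  then have "m w \<in> carrier (pi1 E src v0)" using assms(2) by (rule hom_in_carrier)
  then show "is_path E src v0 (m w) v0" "reduced (m w)" by (simp_all add: carrier_pi1)
qed

lemma reduce_cancel_right: "reduce (u @ inv_w v @ v) = reduce u"
proof -
  have "reduce (u @ inv_w v @ v) = reduce (u @ reduce (inv_w v @ v))" by (simp only: reduce_right)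
  then show ?thesis by simp
qed

lemma mg_equivI:
  assumes "valid_mgraph n (V, E, src, len, v0, m)" "valid_mgraph n (V', E', src', len', v0', m')"
    "bij_betw hv V V'" "bij_betw he (E \<times> UNIV) (E' \<times> UNIV)"
    "\<And>d. d \<in> E \<times> UNIV \<Longrightarrow> he (flip d) = flip (he d) \<and> src' (he d) = hv (src d) \<and> len' (fst (he d)) = len (fst d)"
    "is_path E' src' (hv v0) \<gamma> v0'"
    "\<And>w. w \<in> carrier (FG n) \<Longrightarrow> m' w = reduce (inv_w \<gamma> @ map he (m w) @ \<gamma>)"
  shows "mg_equiv n (V, E, src, len, v0, m) (V', E', src', len', v0', m')"
  unfolding mg_equiv_tuple using assms by blast

lemma mg_equivE:
  assumes "mg_equiv n (V, E, src, len, v0, m) (V', E', src', len', v0', m')"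
  obtains hv he \<gamma> where "valid_mgraph n (V, E, src, len, v0, m)" "valid_mgraph n (V', E', src', len', v0', m')"
    "bij_betw hv V V'" "bij_betw he (E \<times> UNIV) (E' \<times> UNIV)"
    "\<And>d. d \<in> E \<times> UNIV \<Longrightarrow> he (flip d) = flip (he d) \<and> src' (he d) = hv (src d) \<and> len' (fst (he d)) = len (fst d)"
    "is_path E' src' (hv v0) \<gamma> v0'"
    "\<And>w. w \<in> carrier (FG n) \<Longrightarrow> m' w = reduce (inv_w \<gamma> @ map he (m w) @ \<gamma>)"
  using assms unfolding mg_equiv_tuple by blast

lemma mg_refl: "valid_mgraph n g \<Longrightarrow> mg_equiv n g g"
proof -
  assume v: "valid_mgraph n g"
  obtain V E src len v0 m where g: "g = (V, E, src, len, v0, m)" by (cases g) auto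
  have v': "valid_mgraph n (V, E, src, len, v0, m)" using v g by simp
  show ?thesis unfolding g
  proof (rule mg_equivI[OF v' v', where hv = id and he = id and \<gamma> = "[]"])
    fix w assume "w \<in> carrier (FG n)"
    then show "m w = reduce (inv_w [] @ map id (m w) @ [])"
      using valid_m_carrier(2)[OF v'] by (simp add: reduce_reduced)
  qed simp_all
qed

lemma valid_src: "valid_mgraph n (V, E, src, len, v0, m) \<Longrightarrow> d \<in> E \<times> UNIV \<Longrightarrow> src d \<in> V"
  by (cases d) (auto simp: valid_tuple metric_graph_def)

lemma valid_v0: "valid_mgraph n (V, E, src, len, v0, m) \<Longrightarrow> v0 \<in> V"
  by (simp add: valid_tuple)

lemma flip_Times: "d \<in> E \<times> UNIV \<Longrightarrow> flip d \<in> E \<times> UNIV"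
  by (cases d) (simp add: flip_def)

lemma set_inv_w_Times: "set w \<subseteq> E \<times> UNIV \<Longrightarrow> set (inv_w w) \<subseteq> E \<times> UNIV"
proof
  fix x assume a: "set w \<subseteq> E \<times> UNIV" "x \<in> set (inv_w w)"
  then obtain d where "d \<in> set w" "x = flip d" by (auto simp: set_inv_w)
  then show "x \<in> E \<times> UNIV" using a(1) flip_Times by blast
qed

lemma mg_sym: "mg_equiv n g g' \<Longrightarrow> mg_equiv n g' g"
proof -
  assume e: "mg_equiv n g g'"
  obtain V E src len v0 m where g: "g = (V, E, src, len, v0, m)" by (cases g) auto
  obtain V' E' src' len' v0' m' where g': "g' = (V', E', src', len', v0', m')" by (cases g') auto
  obtain hv he \<gamma> where v: "valid_mgraph n (V, E, src, len, v0, m)" and v': "valid_mgraph n (V', E', src', len', v0', m')"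
    and bv: "bij_betw hv V V'" and be: "bij_betw he (E \<times> UNIV) (E' \<times> UNIV)"
    and c: "\<And>d. d \<in> E \<times> UNIV \<Longrightarrow> he (flip d) = flip (he d) \<and> src' (he d) = hv (src d) \<and> len' (fst (he d)) = len (fst d)"
    and pa: "is_path E' src' (hv v0) \<gamma> v0'"
    and eq: "\<And>w. w \<in> carrier (FG n) \<Longrightarrow> m' w = reduce (inv_w \<gamma> @ map he (m w) @ \<gamma>)"
    using e unfolding g g' by (rule mg_equivE) blast
  define S where "S = E \<times> (UNIV :: bool set)"
  define S' where "S' = E' \<times> (UNIV :: bool set)"
  define hv' where "hv' = inv_into V hv"
  define he' where "he' = inv_into S he"
  define \<gamma>' where "\<gamma>' = map he' (inv_w \<gamma>)"
  have be': "bij_betw he S S'" using be by (simp add: S_def S'_def)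
  have inj: "inj_on he S" using be' by (simp add: bij_betw_def)
  have img: "he ` S = S'" using be' by (simp add: bij_betw_def)
  have he'S: "he' d \<in> S" if "d \<in> S'" for d using that img by (auto simp: he'_def inv_into_into)
  have he_he': "he (he' d) = d" if "d \<in> S'" for d using that img by (simp add: he'_def f_inv_into_f)
  have he'_he: "he' (he d) = d" if "d \<in> S" for d using that inj by (simp add: he'_def inv_into_f_f)
  have flipS: "flip d \<in> S" if "d \<in> S" for d using that flip_Times by (simp add: S_def)
  have flipS': "flip d \<in> S'" if "d \<in> S'" for d using that flip_Times by (simp add: S'_def)
  have c': "he' (flip d) = flip (he' d) \<and> src (he' d) = hv' (src' d) \<and> len (fst (he' d)) = len' (fst d)"
    if d: "d \<in> S'" for d
  proof -
    have d0: "he' d \<in> S" by (rule he'S[OF d])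
    have cc: "he (flip (he' d)) = flip d" "src' d = hv (src (he' d))" "len' (fst d) = len (fst (he' d))"
      using c[of "he' d"] d0 he_he'[OF d] by (simp_all add: S_def)
    have "he' (flip d) = flip (he' d)" using cc(1) he'_he[OF flipS[OF d0]] by simp
    moreover have "hv' (src' d) = src (he' d)"
      unfolding cc(2) hv'_def using bv valid_src[OF v, of "he' d"] d0
      by (simp add: S_def bij_betw_def inv_into_f_f)
    ultimately show ?thesis using cc(3) by simp
  qed
  have bv': "bij_betw hv' V' V" unfolding hv'_def by (rule bij_betw_inv_into[OF bv])
  have be'': "bij_betw he' (E' \<times> UNIV) (E \<times> UNIV)" unfolding he'_def S_def[symmetric] S'_def[symmetric]
    by (rule bij_betw_inv_into[OF be'])
  have setg: "set \<gamma> \<subseteq> S'" using is_path_set[OF pa] by (simp add: S'_def)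
  have pa': "is_path E src (hv' v0') \<gamma>' (hv' (hv v0))"
    unfolding \<gamma>'_def
  proof (rule is_path_map[OF _ _ is_path_inv[OF pa]])
    show "\<forall>d\<in>E' \<times> UNIV. he' (flip d) = flip (he' d) \<and> src (he' d) = hv' (src' d)"
      using c' by (simp add: S'_def)
    show "\<forall>d\<in>E' \<times> UNIV. fst (he' d) \<in> E"
      using he'S by (auto simp: S_def S'_def mem_Times_iff)
  qed
  have "hv' (hv v0) = v0" unfolding hv'_def using bv valid_v0[OF v] by (simp add: bij_betw_def inv_into_f_f)
  then have pa'': "is_path E src (hv' v0') \<gamma>' v0" using pa' by simp
  have eq': "m w = reduce (inv_w \<gamma>' @ map he' (m' w) @ \<gamma>')" if w: "w \<in> carrier (FG n)" for w
  proof -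
    have smw: "set (m w) \<subseteq> S" using is_path_set[OF valid_m_carrier(1)[OF v w]] by (simp add: S_def)
    define u where "u = inv_w \<gamma> @ map he (m w) @ \<gamma>"
    have s1: "set (inv_w \<gamma>) \<subseteq> S'" using set_inv_w_Times setg by (simp add: S'_def)
    have s2: "set (map he (m w)) \<subseteq> S'" using smw img by auto
    have su: "set u \<subseteq> S'" using s1 s2 setg by (simp add: u_def)
    have "map he' (m' w) = map he' (reduce u)" using eq[OF w] by (simp add: u_def)
    also have "\<dots> = reduce (map he' u)"
    proof (rule map_reduce[OF _ _ su])
      show "inj_on he' S'" unfolding he'_def using img by (simp add: inj_on_inv_into)
      show "\<forall>d\<in>S'. flip d \<in> S' \<and> he' (flip d) = flip (he' d)" using flipS' c' by blast
    qed
    also have "map he' u = \<gamma>' @ m w @ inv_w \<gamma>'"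
    proof -
      have "map he' (map he (m w)) = m w" unfolding map_map
        by (rule map_idI) (use smw he'_he in auto)
      moreover have "inv_w \<gamma>' = map he' \<gamma>"
        unfolding \<gamma>'_def using setg c' flipS' by (subst map_inv_w[symmetric]) (auto simp: set_inv_w)
      ultimately show ?thesis by (simp add: u_def \<gamma>'_def)
    qed
    finally have "map he' (m' w) = reduce (\<gamma>' @ m w @ inv_w \<gamma>')" .
    then have "reduce (inv_w \<gamma>' @ map he' (m' w) @ \<gamma>') = reduce (inv_w \<gamma>' @ \<gamma>' @ m w @ inv_w \<gamma>' @ \<gamma>')"
      by (simp add: reduce_mid)
    also have "\<dots> = reduce (m w @ inv_w \<gamma>' @ \<gamma>')" by (rule reduce_cancel')
    also have "\<dots> = reduce (m w)" by (rule reduce_cancel_right)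
    also have "\<dots> = m w" using valid_m_carrier(2)[OF v w] by (simp add: reduce_reduced)
    finally show ?thesis by simp
  qed
  show ?thesis unfolding g g'
    by (rule mg_equivI[OF v' v bv' be'' _ pa'' eq']) (use c' in \<open>simp add: S'_def\<close>)
qed

lemma mg_trans: "mg_equiv n g g' \<Longrightarrow> mg_equiv n g' g'' \<Longrightarrow> mg_equiv n g g''"
proof -
  assume e1: "mg_equiv n g g'" and e2: "mg_equiv n g' g''"
  obtain V E src len v0 m where g: "g = (V, E, src, len, v0, m)" by (cases g) auto
  obtain V' E' src' len' v0' m' where g': "g' = (V', E', src', len', v0', m')" by (cases g') auto
  obtain V'' E'' src'' len'' v0'' m'' where g'': "g'' = (V'', E'', src'', len'', v0'', m'')" by (cases g'') auto
  obtain hv1 he1 \<gamma>1 where v: "valid_mgraph n (V, E, src, len, v0, m)"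
    and bv1: "bij_betw hv1 V V'" and be1: "bij_betw he1 (E \<times> UNIV) (E' \<times> UNIV)"
    and c1: "\<And>d. d \<in> E \<times> UNIV \<Longrightarrow> he1 (flip d) = flip (he1 d) \<and> src' (he1 d) = hv1 (src d) \<and> len' (fst (he1 d)) = len (fst d)"
    and pa1: "is_path E' src' (hv1 v0) \<gamma>1 v0'"
    and eq1: "\<And>w. w \<in> carrier (FG n) \<Longrightarrow> m' w = reduce (inv_w \<gamma>1 @ map he1 (m w) @ \<gamma>1)"
    using e1 unfolding g g' by (rule mg_equivE) blast
  obtain hv2 he2 \<gamma>2 where v'': "valid_mgraph n (V'', E'', src'', len'', v0'', m'')"
    and bv2: "bij_betw hv2 V' V''" and be2: "bij_betw he2 (E' \<times> UNIV) (E'' \<times> UNIV)"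
    and c2: "\<And>d. d \<in> E' \<times> UNIV \<Longrightarrow> he2 (flip d) = flip (he2 d) \<and> src'' (he2 d) = hv2 (src' d) \<and> len'' (fst (he2 d)) = len' (fst d)"
    and pa2: "is_path E'' src'' (hv2 v0') \<gamma>2 v0''"
    and eq2: "\<And>w. w \<in> carrier (FG n) \<Longrightarrow> m'' w = reduce (inv_w \<gamma>2 @ map he2 (m' w) @ \<gamma>2)"
    using e2 unfolding g' g'' by (rule mg_equivE) blast
  have he1S: "he1 d \<in> E' \<times> UNIV" if "d \<in> E \<times> UNIV" for d using that be1 by (auto simp: bij_betw_def)
  have c: "(he2 \<circ> he1) (flip d) = flip ((he2 \<circ> he1) d) \<and> src'' ((he2 \<circ> he1) d) = (hv2 \<circ> hv1) (src d)
      \<and> len'' (fst ((he2 \<circ> he1) d)) = len (fst d)" if d: "d \<in> E \<times> UNIV" for d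
    using c1[OF d] c2[OF he1S[OF d]] by simp
  have pm: "is_path E'' src'' (hv2 (hv1 v0)) (map he2 \<gamma>1) (hv2 v0')"
  proof (rule is_path_map[OF _ _ pa1])
    show "\<forall>d\<in>E' \<times> UNIV. he2 (flip d) = flip (he2 d) \<and> src'' (he2 d) = hv2 (src' d)" using c2 by blast
    show "\<forall>d\<in>E' \<times> UNIV. fst (he2 d) \<in> E''"
    proof
      fix d :: letter assume "d \<in> E' \<times> UNIV"
      then have "he2 d \<in> E'' \<times> UNIV" using be2 bij_betwE by blast
      then show "fst (he2 d) \<in> E''" by (auto simp: mem_Times_iff)
    qed
  qed
  have pa: "is_path E'' src'' ((hv2 \<circ> hv1) v0) (map he2 \<gamma>1 @ \<gamma>2) v0''"
    using pm pa2 by (auto simp: is_path_append)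
  have eq: "m'' w = reduce (inv_w (map he2 \<gamma>1 @ \<gamma>2) @ map (he2 \<circ> he1) (m w) @ (map he2 \<gamma>1 @ \<gamma>2))"
    if w: "w \<in> carrier (FG n)" for w
  proof -
    have inj2: "inj_on he2 (E' \<times> UNIV)" using be2 by (simp add: bij_betw_def)
    have cl: "\<forall>d\<in>E' \<times> UNIV. flip d \<in> E' \<times> UNIV \<and> he2 (flip d) = flip (he2 d)" using c2 flip_Times by blast
    have s1: "set \<gamma>1 \<subseteq> E' \<times> UNIV" by (rule is_path_set[OF pa1])
    have s0: "set (m w) \<subseteq> E \<times> UNIV" by (rule is_path_set[OF valid_m_carrier(1)[OF v w]])
    have s2: "set (map he1 (m w)) \<subseteq> E' \<times> UNIV"
    proof
      fix x assume "x \<in> set (map he1 (m w))"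
      then obtain d where "d \<in> set (m w)" "x = he1 d" by auto
      then show "x \<in> E' \<times> UNIV" using s0 he1S by blast
    qed
    have su: "set (inv_w \<gamma>1 @ map he1 (m w) @ \<gamma>1) \<subseteq> E' \<times> UNIV"
      using set_inv_w_Times[OF s1] s1 s2 by simp
    have "map he2 (m' w) = reduce (map he2 (inv_w \<gamma>1 @ map he1 (m w) @ \<gamma>1))"
      using eq1[OF w] map_reduce[OF inj2 cl su] by simp
    also have "map he2 (inv_w \<gamma>1 @ map he1 (m w) @ \<gamma>1) = inv_w (map he2 \<gamma>1) @ map (he2 \<circ> he1) (m w) @ map he2 \<gamma>1"
      using map_inv_w[of \<gamma>1 he2] c2 s1 by auto
    finally have "map he2 (m' w) = reduce (inv_w (map he2 \<gamma>1) @ map (he2 \<circ> he1) (m w) @ map he2 \<gamma>1)" .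
    then show ?thesis using eq2[OF w] by (simp add: reduce_mid)
  qed
  have bv: "bij_betw (hv2 \<circ> hv1) V V''" by (rule bij_betw_trans[OF bv1 bv2])
  have be: "bij_betw (he2 \<circ> he1) (E \<times> UNIV) (E'' \<times> UNIV)" by (rule bij_betw_trans[OF be1 be2])
  show ?thesis unfolding g g''
    by (rule mg_equivI[OF v v'' bv be c pa eq])
qed

lemma valid_precomp: "valid_mgraph n g \<Longrightarrow> \<Phi> \<in> Aut n \<Longrightarrow> valid_mgraph n (precomp g \<Phi>)"
  by (cases g) (auto simp: valid_tuple precomp_def Aut_def intro: iso_set_trans)

lemma mg_precomp: "mg_equiv n g g' \<Longrightarrow> \<Phi> \<in> Aut n \<Longrightarrow> mg_equiv n (precomp g \<Phi>) (precomp g' \<Phi>)"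
proof -
  assume e: "mg_equiv n g g'" and a: "\<Phi> \<in> Aut n"
  obtain V E src len v0 m where g: "g = (V, E, src, len, v0, m)" by (cases g) auto
  obtain V' E' src' len' v0' m' where g': "g' = (V', E', src', len', v0', m')" by (cases g') auto
  obtain hv he \<gamma> where v: "valid_mgraph n (V, E, src, len, v0, m)" and v': "valid_mgraph n (V', E', src', len', v0', m')"
    and bv: "bij_betw hv V V'" and be: "bij_betw he (E \<times> UNIV) (E' \<times> UNIV)"
    and c: "\<And>d. d \<in> E \<times> UNIV \<Longrightarrow> he (flip d) = flip (he d) \<and> src' (he d) = hv (src d) \<and> len' (fst (he d)) = len (fst d)"
    and pa: "is_path E' src' (hv v0) \<gamma> v0'"
    and eq: "\<And>w. w \<in> carrier (FG n) \<Longrightarrow> m' w = reduce (inv_w \<gamma> @ map he (m w) @ \<gamma>)"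
    using e unfolding g g' by (rule mg_equivE) blast
  have pv: "valid_mgraph n (V, E, src, len, v0, m \<circ> \<Phi>)" using valid_precomp[OF v a] by (simp add: precomp_def)
  have pv': "valid_mgraph n (V', E', src', len', v0', m' \<circ> \<Phi>)" using valid_precomp[OF v' a] by (simp add: precomp_def)
  show ?thesis unfolding g g' precomp_def prod.case
    by (rule mg_equivI[OF pv pv' bv be c pa]) (simp_all add: eq Aut_carrier[OF a])
qed

lemma mg_inner:
  assumes v: "valid_mgraph n g" and a0: "\<Phi>0 \<in> Aut n" and \<Phi>: "\<Phi> \<in> out_class n \<Phi>0"
  shows "mg_equiv n (precomp g \<Phi>0) (precomp g \<Phi>)"
proof -
  obtain V E src len v0 m where g: "g = (V, E, src, len, v0, m)" by (cases g) auto
  have v1: "valid_mgraph n (V, E, src, len, v0, m)" using v g by simp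
  obtain h where a: "\<Phi> \<in> Aut n" and h: "h \<in> carrier (FG n)"
    and hw: "\<And>w. w \<in> carrier (FG n) \<Longrightarrow> \<Phi> w = h \<otimes>\<^bsub>FG n\<^esub> \<Phi>0 w \<otimes>\<^bsub>FG n\<^esub> inv\<^bsub>FG n\<^esub> h"
    using out_classE[OF \<Phi>] by metis
  have mh: "m \<in> hom (FG n) (pi1 E src v0)" using v1 by (simp add: valid_tuple iso_def)
  interpret F: group "FG n" by (rule group_free)
  interpret P: group "pi1 E src v0" by (rule group_pi1)
  interpret hm: group_hom "FG n" "pi1 E src v0" m
    using mh by (simp add: group_hom_def group_hom_axioms_def group_free group_pi1)
  have mhc: "m h \<in> carrier (pi1 E src v0)" using h by simp
  have pv: "valid_mgraph n (V, E, src, len, v0, m \<circ> \<Phi>0)" using valid_precomp[OF v1 a0] by (simp add: precomp_def)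
  have pv': "valid_mgraph n (V, E, src, len, v0, m \<circ> \<Phi>)" using valid_precomp[OF v1 a] by (simp add: precomp_def)
  have pa: "is_path E src (id v0) (inv_w (m h)) v0"
    using is_path_inv mhc by (simp add: carrier_pi1)
  show ?thesis unfolding g precomp_def prod.case
  proof (rule mg_equivI[where hv = id and he = id, OF pv pv' _ _ _ pa])
    fix w assume w: "w \<in> carrier (FG n)"
    have c0: "\<Phi>0 w \<in> carrier (FG n)" by (rule Aut_carrier[OF a0 w])
    have "m (\<Phi> w) = m h \<otimes>\<^bsub>pi1 E src v0\<^esub> m (\<Phi>0 w) \<otimes>\<^bsub>pi1 E src v0\<^esub> inv\<^bsub>pi1 E src v0\<^esub> m h"
      using hw[OF w] h c0 by simp
    also have "\<dots> = reduce (m h @ m (\<Phi>0 w) @ inv_w (m h))"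
      using mhc by (simp add: mult_pi1 inv_pi1)
    finally show "(m \<circ> \<Phi>) w = reduce (inv_w (inv_w (m h)) @ map id ((m \<circ> \<Phi>0) w) @ inv_w (m h))"
      by simp
  qed simp_all
qed

lemma mg_carrier_cong:
  assumes v: "valid_mgraph n (V, E, src, len, v0, m)" and eq: "\<And>w. w \<in> carrier (FG n) \<Longrightarrow> m' w = m w"
  shows "mg_equiv n (V, E, src, len, v0, m) (V, E, src, len, v0, m')"
proof -
  have "m \<in> iso (FG n) (pi1 E src v0)" using v by (simp add: valid_tuple)
  then have "m' \<in> iso (FG n) (pi1 E src v0)" using eq by (rule group.iso_eq[OF group_free])
  then have v': "valid_mgraph n (V, E, src, len, v0, m')" using v by (simp add: valid_tuple)
  show ?thesis
  proof (rule mg_equivI[OF v v', where hv = id and he = id and \<gamma> = "[]"])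
    fix w assume w: "w \<in> carrier (FG n)"
    then show "m' w = reduce (inv_w [] @ map id (m w) @ [])"
      using valid_m_carrier(2)[OF v w] eq[OF w] by (simp add: reduce_reduced)
  qed simp_all
qed

lemma mg_class_eq: "mg_equiv n g g' \<Longrightarrow> mg_class n g = mg_class n g'"
  unfolding mg_class_def using mg_sym mg_trans by blast

lemma cv_act_class:
  assumes v: "valid_mgraph n g" and a0: "\<Phi>0 \<in> Aut n"
  shows "cv_act n (mg_class n g) (out_class n \<Phi>0) = mg_class n (precomp g \<Phi>0)"
proof (rule equalityI)
  show "cv_act n (mg_class n g) (out_class n \<Phi>0) \<subseteq> mg_class n (precomp g \<Phi>0)"
  proof
    fix g' assume "g' \<in> cv_act n (mg_class n g) (out_class n \<Phi>0)"
    then obtain g1 \<Phi> where g1: "mg_equiv n g g1" and \<Phi>: "\<Phi> \<in> out_class n \<Phi>0"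
      and e: "mg_equiv n (precomp g1 \<Phi>) g'"
      by (auto simp: cv_act_def mg_class_def)
    have a: "\<Phi> \<in> Aut n" using \<Phi> by (simp add: out_class_def)
    have "mg_equiv n (precomp g \<Phi>0) (precomp g \<Phi>)" by (rule mg_inner[OF v a0 \<Phi>])
    moreover have "mg_equiv n (precomp g \<Phi>) (precomp g1 \<Phi>)" by (rule mg_precomp[OF g1 a])
    ultimately show "g' \<in> mg_class n (precomp g \<Phi>0)"
      using e mg_trans unfolding mg_class_def by blast
  qed
  show "mg_class n (precomp g \<Phi>0) \<subseteq> cv_act n (mg_class n g) (out_class n \<Phi>0)"
    unfolding cv_act_def mg_class_def using mg_refl[OF v] self_out_class[OF a0] by blast
qed

lemma CV_elem: "x \<in> CV n \<Longrightarrow> \<exists>g. valid_mgraph n g \<and> x = mg_class n g"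
  unfolding CV_def by (erule imageE) (rule exI, erule conjI[rotated], simp)

definition XA :: "nat \<Rightarrow> mgraph set \<Rightarrow> (word \<Rightarrow> word) \<Rightarrow> mgraph set" where
  "XA n y \<Phi> = cv_act n y (out_class n \<Phi>)"

lemma precomp_cong:
  assumes v: "valid_mgraph n g" and eq: "\<And>w. w \<in> carrier (FG n) \<Longrightarrow> \<Phi> w = \<Psi> w"
    and that: "\<Phi> \<in> Aut n"
  shows "mg_equiv n (precomp g \<Phi>) (precomp g \<Psi>)"
proof -
  obtain V E src len v0 m where g: "g = (V, E, src, len, v0, m)" by (cases g) auto
  have pv: "valid_mgraph n (V, E, src, len, v0, m \<circ> \<Phi>)" using valid_precomp[OF v that] g by (simp add: precomp_def)
  show ?thesis unfolding g precomp_def prod.case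
    by (rule mg_carrier_cong[OF pv]) (simp add: eq)
qed

lemma right_act_XA:
  assumes x: "x \<in> CV n"
  shows "right_act (AG n) (XA n) x"
proof -
  obtain g where v: "valid_mgraph n g" and xg: "x = mg_class n g" using CV_elem[OF x] by blast
  interpret G: group "AG n" by (rule group_AG)
  show ?thesis
  proof (unfold_locales)
    have one: "\<one>\<^bsub>AG n\<^esub> \<in> auto (FG n)" using G.one_closed carrier_AG by metis
    have "XA n x \<one>\<^bsub>AG n\<^esub> = mg_class n (precomp g \<one>\<^bsub>AG n\<^esub>)"
      unfolding XA_def xg by (rule cv_act_class[OF v auto_Aut[OF one]])
    also have "\<dots> = mg_class n (precomp g id)"
      by (rule mg_class_eq[OF precomp_cong[OF v _ auto_Aut[OF one]]]) (simp add: one_AG)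
    also have "precomp g id = g" by (cases g) (simp add: precomp_def)
    finally show "XA n x \<one>\<^bsub>AG n\<^esub> = x" using xg by simp
  next
    fix a b assume a: "a \<in> carrier (AG n)" and b: "b \<in> carrier (AG n)"
    have a': "a \<in> auto (FG n)" and b': "b \<in> auto (FG n)" using a b carrier_AG by auto
    have ab: "a \<otimes>\<^bsub>AG n\<^esub> b \<in> auto (FG n)" using G.m_closed[OF a b] carrier_AG by metis
    have "XA n (XA n x a) b = XA n (mg_class n (precomp g a)) b"
      unfolding XA_def xg using cv_act_class[OF v auto_Aut[OF a']] by simp
    also have "\<dots> = mg_class n (precomp (precomp g a) b)"
      unfolding XA_def by (rule cv_act_class[OF valid_precomp[OF v auto_Aut[OF a']] auto_Aut[OF b']])
    also have "\<dots> = mg_class n (precomp g (a \<otimes>\<^bsub>AG n\<^esub> b))"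
    proof -
      have "precomp (precomp g a) b = precomp g (a \<circ> b)" by (cases g) (simp add: precomp_def comp_assoc)
      moreover have "mg_equiv n (precomp g (a \<circ> b)) (precomp g (a \<otimes>\<^bsub>AG n\<^esub> b))"
      proof (rule precomp_cong[OF v])
        show "a \<circ> b \<in> Aut n" using auto_Aut[OF a'] auto_Aut[OF b'] by (simp add: Aut_def iso_set_trans)
      next
        fix w assume "w \<in> carrier (FG n)"
        then show "(a \<circ> b) w = (a \<otimes>\<^bsub>AG n\<^esub> b) w" using a' b' by (simp add: mult_AG compose_def)
      qed
      ultimately show ?thesis using mg_class_eq by metis
    qed
    also have "\<dots> = XA n x (a \<otimes>\<^bsub>AG n\<^esub> b)"
      unfolding XA_def xg by (rule cv_act_class[OF v auto_Aut[OF ab], symmetric])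
    finally show "XA n (XA n x a) b = XA n x (a \<otimes>\<^bsub>AG n\<^esub> b)" .
  qed
qed

lemma right_act_hact:
  assumes "f0 \<in> extensional (carrier (FG n))"
  shows "right_act (AG n) (\<lambda>f \<Phi>. hact n \<Phi> f) f0"
proof -
  interpret G: group "AG n" by (rule group_AG)
  show ?thesis
  proof (unfold_locales)
    show "hact n \<one>\<^bsub>AG n\<^esub> f0 = f0" by (rule hact_one[OF assms])
    fix a b assume "a \<in> carrier (AG n)" "b \<in> carrier (AG n)"
    then show "hact n b (hact n a f0) = hact n (a \<otimes>\<^bsub>AG n\<^esub> b) f0"
      using hact_mult carrier_AG by metis
  qed
qed

theorem lemma6p6:
  fixes n p :: nat and x :: "mgraph set" and N :: "word set"
  assumes "n \<ge> 2" and "Factorial_Ring.prime p" and "x \<in> CV n"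
    and "N \<lhd> free_group n" and "card (rcosets\<^bsub>free_group n\<^esub> N) = p"
  defines "A \<equiv> coset_stab n N"
  defines "SA \<equiv> (\<lambda>y. cv_act n y ` A) ` (cv_act n x ` Out n)"
    and "SB \<equiv> (\<lambda>P. (\<lambda>\<phi>. pair_act n \<phi> P) ` stab n x) ` index_p_pairs n p"
    and "SC \<equiv> (\<lambda>f. (\<lambda>\<phi>. hom_act n \<phi> f) ` stab n x) ` nontriv_homs n p"
  shows "finite SA \<and> finite SB \<and> finite SC \<and> card SA = card SB \<and> card SB = card SC"
proof -
  have n: "n \<ge> 2" and p: "Factorial_Ring.prime p" and x: "x \<in> CV n" and norm: "N \<lhd> free_group n"
    and cardR: "card (rcosets\<^bsub>free_group n\<^esub> N) = p" using assms(1-5) .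
  have p0: "p > 0" using p prime_gt_0_nat by blast
  have p1: "p > 1" using p prime_gt_1_nat by blast
  interpret F: group "FG n" by (rule group_free)
  interpret Nn: normal N "FG n" by (rule norm)
  have NR: "N \<in> rcosets\<^bsub>FG n\<^esub> N"
    using F.rcosetsI[OF Nn.subset F.one_closed] F.coset_mult_one[OF Nn.subset] by simp
  obtain C where C: "C \<in> rcosets\<^bsub>FG n\<^esub> N" "C \<noteq> N"
  proof (rule ccontr)
    assume "\<not> thesis"
    then have "\<forall>C\<in>rcosets\<^bsub>FG n\<^esub> N. C = N" using that by blast
    then have "rcosets\<^bsub>FG n\<^esub> N \<subseteq> {N}" by blast
    moreover have "finite (rcosets\<^bsub>FG n\<^esub> N)" using cardR p0 card_ge_0_finite by auto
    ultimately have "card (rcosets\<^bsub>FG n\<^esub> N) \<le> 1" using card_mono[of "{N}"] by simp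
    then show False using cardR p1 by simp
  qed
  have "(N, C) \<in> index_p_pairs n p" unfolding index_p_pairs_def using norm cardR C by simp
  then obtain f0 where f0: "nthom n p f0" "kap n f0 = (N, C)" using kap_onto[OF p] by blast
  have Nf0: "N = {w \<in> carrier (FG n). f0 w = 0}" using f0(2) by (simp add: kap_def)
  have f0h: "f0 \<in> hom (FG n) (ZP p)" "f0 \<in> extensional (carrier (FG n))" using f0(1) by (auto simp: nthom_def)
  have Aeq: "A = {\<phi> \<in> Out n. hom_act n \<phi> f0 = f0}"
    unfolding A_def by (rule coset_stab_eq[OF f0h p0 Nf0])
  define A' where "A' = {a \<in> carrier (AG n). hact n a f0 = f0}"
  define S' where "S' = {a \<in> carrier (AG n). XA n x a = x}"
  have RX: "right_act (AG n) (XA n) x" by (rule right_act_XA[OF x])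
  have RF: "right_act (AG n) (\<lambda>f \<Phi>. hact n \<Phi> f) f0" by (rule right_act_hact[OF f0h(2)])
  have T1: "Out n = out_class n ` carrier (AG n)" by (simp add: Out_eq carrier_AG)
  have T2: "A = out_class n ` A'"
  proof (rule equalityI)
    show "A \<subseteq> out_class n ` A'"
    proof
      fix \<phi> assume "\<phi> \<in> A"
      then have \<phi>: "\<phi> \<in> Out n" "hom_act n \<phi> f0 = f0" using Aeq by auto
      then obtain a where a: "a \<in> auto (FG n)" "\<phi> = out_class n a" using Out_eq by blast
      have "hact n a f0 = f0" using \<phi>(2) hom_act_class[OF f0h(1) a(1)] a(2) by simp
      then show "\<phi> \<in> out_class n ` A'" using a by (auto simp: A'_def carrier_AG)
    qed
    show "out_class n ` A' \<subseteq> A"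
    proof
      fix \<phi> assume "\<phi> \<in> out_class n ` A'"
      then obtain a where a: "a \<in> auto (FG n)" "hact n a f0 = f0" "\<phi> = out_class n a"
        by (auto simp: A'_def carrier_AG)
      then show "\<phi> \<in> A" using Aeq hom_act_class[OF f0h(1) a(1)] Out_eq by auto
    qed
  qed
  have T3: "stab n x = out_class n ` S'"
  proof (rule equalityI)
    show "stab n x \<subseteq> out_class n ` S'"
    proof
      fix \<phi> assume "\<phi> \<in> stab n x"
      then have \<phi>: "\<phi> \<in> Out n" "cv_act n x \<phi> = x" by (auto simp: stab_def)
      then obtain a where a: "a \<in> auto (FG n)" "\<phi> = out_class n a" using Out_eq by blast
      then show "\<phi> \<in> out_class n ` S'" using \<phi> by (auto simp: S'_def carrier_AG XA_def)
    qed
    show "out_class n ` S' \<subseteq> stab n x"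
      using Out_eq by (auto simp: S'_def carrier_AG XA_def stab_def)
  qed
  have T4: "SA = (\<lambda>y. (\<lambda>c. XA n y c) ` A') ` (XA n x ` carrier (AG n))"
    unfolding SA_def T1 T2 by (simp add: image_image XA_def)
  have T5: "nontriv_homs n p = (\<lambda>a. hact n a f0) ` carrier (AG n)"
  proof (rule equalityI)
    show "nontriv_homs n p \<subseteq> (\<lambda>a. hact n a f0) ` carrier (AG n)"
    proof
      fix f assume "f \<in> nontriv_homs n p"
      then have "nthom n p f" by (simp add: nontriv_homs_nthom)
      then have "reach n f0 f" using nthom_reach[OF p n f0(1)] by blast
      then show "f \<in> (\<lambda>a. hact n a f0) ` carrier (AG n)" by (auto simp: reach_def carrier_AG)
    qed
    show "(\<lambda>a. hact n a f0) ` carrier (AG n) \<subseteq> nontriv_homs n p"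
      using hact_nthom[OF f0(1)] by (auto simp: nontriv_homs_nthom carrier_AG)
  qed
  have orb: "(\<lambda>\<phi>. hom_act n \<phi> f) ` stab n x = (\<lambda>s. hact n s f) ` S'" if f: "nthom n p f" for f
  proof -
    have fh: "f \<in> hom (FG n) (ZP p)" using f by (simp add: nthom_def)
    have "(\<lambda>\<phi>. hom_act n \<phi> f) ` stab n x = (\<lambda>s. hom_act n (out_class n s) f) ` S'"
      unfolding T3 by (simp add: image_image)
    also have "\<dots> = (\<lambda>s. hact n s f) ` S'"
      by (rule image_cong[OF refl]) (use hom_act_class[OF fh] in \<open>auto simp: S'_def carrier_AG\<close>)
    finally show ?thesis .
  qed
  have T6: "SC = (\<lambda>f. (\<lambda>s. hact n s f) ` S') ` ((\<lambda>a. hact n a f0) ` carrier (AG n))"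
    unfolding SC_def T5[symmetric]
    by (rule image_cong[OF refl]) (simp add: orb nontriv_homs_nthom)
  obtain h where h: "bij_betw h SA SC"
    using double_coset_count[OF RX RF] unfolding T4 T6 A'_def S'_def by blast
  have finC: "finite SC" unfolding SC_def nontriv_homs_nthom
    by (rule finite_imageI[OF finite_nthom[OF p0]])
  have finA: "finite SA" using h finC bij_betw_finite by blast
  have cAC: "card SA = card SC" using h by (rule bij_betw_same_card)
  have orbsub: "(\<lambda>\<phi>. hom_act n \<phi> f) ` stab n x \<subseteq> {f. nthom n p f}" if f: "nthom n p f" for f
    using orb[OF f] hact_nthom[OF f] by (auto simp: S'_def carrier_AG)
  have SCsub: "SC \<subseteq> Pow {f. nthom n p f}"
    unfolding SC_def nontriv_homs_nthom using orbsub by auto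
  have SBeq: "SB = image (kap n) ` SC"
  proof -
    have "SB = (\<lambda>f. (\<lambda>\<phi>. pair_act n \<phi> (kap n f)) ` stab n x) ` {f. nthom n p f}"
      unfolding SB_def kap_image[OF p, symmetric] by (simp add: image_image)
    also have "\<dots> = (\<lambda>f. kap n ` ((\<lambda>\<phi>. hom_act n \<phi> f) ` stab n x)) ` {f. nthom n p f}"
    proof (rule image_cong[OF refl])
      fix f
      have "(\<lambda>\<phi>. pair_act n \<phi> (kap n f)) ` stab n x = (\<lambda>\<phi>. kap n (hom_act n \<phi> f)) ` stab n x"
        by (rule image_cong[OF refl]) (simp add: pair_act_kap stab_def)
      then show "(\<lambda>\<phi>. pair_act n \<phi> (kap n f)) ` stab n x = kap n ` ((\<lambda>\<phi>. hom_act n \<phi> f) ` stab n x)"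
        by (simp add: image_image)
    qed
    also have "\<dots> = image (kap n) ` SC" unfolding SC_def nontriv_homs_nthom by (simp add: image_image)
    finally show ?thesis .
  qed
  have inj: "inj_on (image (kap n)) SC"
    by (rule inj_on_subset[OF inj_on_image_Pow[OF kap_inj[OF p]] SCsub])
  have cBC: "card SB = card SC" unfolding SBeq by (rule card_image[OF inj])
  have finB: "finite SB" unfolding SBeq by (rule finite_imageI[OF finC])
  show ?thesis using finA finB finC cAC cBC by simp
qed

end
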